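(* Let $(\delta_n)$ be a positive sequence with $\log(\delta_n)/\log n\to0$, and let $\beta=\beta_n\ge0$ with $n\log(n)\beta_n\to0$. Set $a_n=\delta_n\sqrt{2\log n}$ and $b_n=\sqrt{2\log n}-\frac{\log\log n+2\log\delta_n+\log(4\pi)}{2\sqrt{2\log n}}$. Fix an integer $1\le k<\infty$ and $(x_1,\dots,x_k)\in\mathbb{R}^k$, and let $$\tilde R^n_k(x_1,\dots,x_k)=\mathbb{E}_{P_{n-k,\beta}}\Big[\exp\Big(\beta\sum_{i=1}^k\sum_{j=1}^{n-k}\log\Big|1+\frac{x_i}{a_nb_n}-\frac{\lambda_j}{b_n}\Big|\Big)\Big].$$ Then $\tilde R^n_k(x_1,\dots,x_k)\to1$ as $n\to\infty$.
   Context: $P_{m,\beta}$ denotes the law on $\mathbb{R}^m$ with density $\frac{1}{Z_{m,\beta}}\exp(-\frac12\sum_{i=1}^m\lambda_i^2)\prod_{1\le i<j\le m}|\lambda_i-\lambda_j|^\beta$ with respect to Lebesgue measure, $Z_{m,\beta}$ being the normalizing constant; under it $(\lambda_1,\dots,\lambda_{m})$ is the coordinate vector. *)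

theory Defs
  imports "HOL-Analysis.Analysis"
begin

text \<open>The product Lebesgue measure on R^m, points represented as nat => real
  (coordinates lambda 0, ..., lambda (m-1)).\<close>
definition RmMeasure :: "nat \<Rightarrow> (nat \<Rightarrow> real) measure" where
  "RmMeasure m = PiM {..<m} (\<lambda>_. lborel)"

text \<open>|t|^beta, with the convention |0|^0 = 1.\<close>
definition abspow :: "real \<Rightarrow> real \<Rightarrow> real" where
  "abspow t b = (if b = 0 then 1 else \<bar>t\<bar> powr b)"

definition beta_dens :: "nat \<Rightarrow> real \<Rightarrow> (nat \<Rightarrow> real) \<Rightarrow> real" where
  "beta_dens m b l = exp (- (1/2) * (\<Sum>i<m. (l i)\<^sup>2)) *
     (\<Prod>i<m. \<Prod>j\<in>{i<..<m}. abspow (l i - l j) b)"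

definition beta_Z :: "nat \<Rightarrow> real \<Rightarrow> real" where
  "beta_Z m b = (\<integral>l. beta_dens m b l \<partial>RmMeasure m)"

definition beta_E :: "nat \<Rightarrow> real \<Rightarrow> ((nat \<Rightarrow> real) \<Rightarrow> real) \<Rightarrow> real" where
  "beta_E m b f = (\<integral>l. f l * beta_dens m b l \<partial>RmMeasure m) / beta_Z m b"

end

theory Submission
  imports Defs "HOL-Probability.Distributions" "HOL-Real_Asymp.Real_Asymp"
begin

lemma abspow_nonneg: "abspow t s \<ge> 0" by (simp add: abspow_def)

lemma abspow_le: assumes "0 \<le> s" "\<bar>t\<bar> \<le> c" "0 < c" shows "abspow t s \<le> c powr s"
  using assms by (auto simp: abspow_def intro: powr_mono2)

lemma abspow_ge: assumes "0 \<le> s" "0 < c" "c \<le> \<bar>t\<bar>" shows "c powr s \<le> abspow t s"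
  using assms by (auto simp: abspow_def intro: powr_mono2)

lemma abspow_scale: assumes "0 \<le> s" "\<bar>t\<bar> \<le> K * \<bar>t'\<bar>" "1 \<le> K"
  shows "abspow t s \<le> K powr s * abspow t' s"
proof (cases "s = 0")
  case True then show ?thesis using assms by (simp add: abspow_def)
next
  case False
  have "\<bar>t\<bar> powr s \<le> (K * \<bar>t'\<bar>) powr s" using assms by (intro powr_mono2) auto
  also have "\<dots> = K powr s * \<bar>t'\<bar> powr s" using assms by (simp add: powr_mult)
  finally show ?thesis using False by (simp add: abspow_def)
qed

lemma abspow_measurable[measurable]: "(\<lambda>t. abspow t s) \<in> borel_measurable borel"
  unfolding abspow_def by (cases "s = 0") auto

lemma abspow_sym: "abspow (x - y) s = abspow (y - x) s"
  by (simp add: abspow_def abs_minus_commute)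

lemma powr_pow_card: "0 < K \<Longrightarrow> (K powr s) ^ n = K powr (s * real n)"
  by (simp add: powr_realpow[symmetric] powr_powr)

definition g1 :: "real \<Rightarrow> (nat \<Rightarrow> real) \<Rightarrow> nat set \<Rightarrow> real \<Rightarrow> real" where
  "g1 s a A y = exp (-(y^2)/2) * (\<Prod>i\<in>A. abspow (y - a i) s)"

lemma g1_nonneg: "g1 s a A y \<ge> 0"
  unfolding g1_def by (intro mult_nonneg_nonneg prod_nonneg) (auto simp: abspow_nonneg)

lemma g1_measurable[measurable]: "g1 s a A \<in> borel_measurable borel"
  unfolding g1_def by measurable

lemma gauss_poly_integrable: "integrable lborel (\<lambda>y::real. exp (-(y^2)/2) * (1 + \<bar>y\<bar>) ^ n)"
proof -
  have i1: "integrable lborel (\<lambda>x. std_normal_density x * \<bar>x\<bar>^n)"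
    by (rule integrable_std_normal_moment_abs)
  have i0: "integrable lborel (\<lambda>x. std_normal_density x * \<bar>x\<bar>^0)"
    by (rule integrable_std_normal_moment_abs)
  define C where "C = (2::real)^n * sqrt (2*pi)"
  have "integrable lborel (\<lambda>x. C * (std_normal_density x * \<bar>x\<bar>^0) + C * (std_normal_density x * \<bar>x\<bar>^n))"
    using i0 i1 by auto
  then show ?thesis
  proof (rule Bochner_Integration.integrable_bound)
    show "AE x in lborel. norm (exp (-(x^2)/2) * (1 + \<bar>x\<bar>) ^ n) \<le>
        norm (C * (std_normal_density x * \<bar>x\<bar>^0) + C * (std_normal_density x * \<bar>x\<bar>^n))"
    proof (intro AE_I2)
      fix x :: real
      have "(1 + \<bar>x\<bar>) ^ n \<le> (2 * max 1 \<bar>x\<bar>) ^ n" by (intro power_mono) auto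
      also have "\<dots> = 2^n * max 1 \<bar>x\<bar> ^ n" by (simp add: power_mult_distrib)
      also have "\<dots> \<le> 2^n * (1 + \<bar>x\<bar>^n)"
        by (intro mult_left_mono) (auto simp: max_def)
      finally have b: "(1 + \<bar>x\<bar>) ^ n \<le> 2^n * (1 + \<bar>x\<bar>^n)" .
      have e: "std_normal_density x = exp (-(x^2)/2) / sqrt (2*pi)"
        by (simp add: normal_density_def)
      have "exp (-(x^2)/2) * (1 + \<bar>x\<bar>) ^ n \<le> exp (-(x^2)/2) * (2^n * (1 + \<bar>x\<bar>^n))"
        using b by (intro mult_left_mono) auto
      also have "\<dots> = C * (std_normal_density x * \<bar>x\<bar>^0) + C * (std_normal_density x * \<bar>x\<bar>^n)"
        unfolding e C_def by (simp add: field_simps)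
      finally show "norm (exp (-(x^2)/2) * (1 + \<bar>x\<bar>) ^ n) \<le>
        norm (C * (std_normal_density x * \<bar>x\<bar>^0) + C * (std_normal_density x * \<bar>x\<bar>^n))"
        by simp
    qed
  qed measurable
qed

lemma powr_le_pow_ceiling: assumes "1 \<le> (x::real)" "0 \<le> c" shows "x powr c \<le> x ^ nat \<lceil>c\<rceil>"
proof -
  have "x powr c \<le> x powr real (nat \<lceil>c\<rceil>)" using assms by (intro powr_mono) auto
  also have "\<dots> = x ^ nat \<lceil>c\<rceil>" by (rule powr_realpow) (use assms in auto)
  finally show ?thesis .
qed

lemma gauss_powr_integrable: assumes "0 \<le> c"
  shows "integrable lborel (\<lambda>y::real. exp (-(y^2)/2) * (1 + \<bar>y\<bar>) powr c)"
  using gauss_poly_integrable[of "nat \<lceil>c\<rceil>"]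
proof (rule Bochner_Integration.integrable_bound)
  show "AE x in lborel. norm (exp (-(x^2)/2) * (1 + \<bar>x\<bar>) powr c) \<le> norm (exp (-(x^2)/2) * (1 + \<bar>x\<bar>) ^ nat \<lceil>c\<rceil>)"
    using powr_le_pow_ceiling[OF _ assms] by (intro AE_I2) (auto intro!: mult_left_mono)
qed measurable

lemma g1_upper:
  assumes "0 \<le> s" "finite A"
  shows "g1 s a A y \<le> exp (-(y^2)/2) * (1 + \<bar>y\<bar>) powr (s * card A) * (\<Prod>i\<in>A. (1 + \<bar>a i\<bar>) powr s)"
proof -
  have "(\<Prod>i\<in>A. abspow (y - a i) s) \<le> (\<Prod>i\<in>A. (1 + \<bar>y\<bar>) powr s * (1 + \<bar>a i\<bar>) powr s)"
  proof (intro prod_mono conjI abspow_nonneg)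
    fix i assume "i \<in> A"
    have "\<bar>y - a i\<bar> \<le> (1 + \<bar>y\<bar>) * (1 + \<bar>a i\<bar>)"
      by (simp add: algebra_simps) (smt (verit) mult_nonneg_nonneg abs_ge_zero)
    then have "abspow (y - a i) s \<le> ((1 + \<bar>y\<bar>) * (1 + \<bar>a i\<bar>)) powr s"
      using assms by (intro abspow_le) (auto intro: add_pos_nonneg mult_pos_pos)
    then show "abspow (y - a i) s \<le> (1 + \<bar>y\<bar>) powr s * (1 + \<bar>a i\<bar>) powr s"
      by (simp add: powr_mult)
  qed
  also have "\<dots> = (1 + \<bar>y\<bar>) powr (s * card A) * (\<Prod>i\<in>A. (1 + \<bar>a i\<bar>) powr s)"
    by (simp add: prod.distrib powr_pow_card add_pos_nonneg)
  finally show ?thesis unfolding g1_def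
    by (simp add: mult.assoc mult_left_mono)
qed

lemma g1_integrable:
  assumes "0 \<le> s" "finite A"
  shows "integrable lborel (g1 s a A)"
  using integrable_mult_right[OF gauss_powr_integrable[of "s * card A"], of "\<Prod>i\<in>A. (1 + \<bar>a i\<bar>) powr s"]
proof (rule Bochner_Integration.integrable_bound)
  show "AE x in lborel. norm (g1 s a A x) \<le> norm ((\<Prod>i\<in>A. (1 + \<bar>a i\<bar>) powr s) * (exp (-(x^2)/2) * (1 + \<bar>x\<bar>) powr (s * card A)))"
    using g1_upper[OF assms] g1_nonneg by (intro AE_I2) (auto simp: mult_ac intro: order.trans[OF _ abs_ge_self])
qed (use assms in auto)


lemma good_set_measure:
  fixes a :: "nat \<Rightarrow> real" and A :: "nat set" and c \<eta> :: real
  assumes A: "finite A" and eta: "0 < \<eta>" "2 * \<eta> * card A \<le> 1"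
  shows "measure lborel {y \<in> {c..c+2}. \<forall>i\<in>A. \<eta> \<le> \<bar>y - a i\<bar>} \<ge> 1"
proof -
  define G where "G = {y \<in> {c..c+2}. \<forall>i\<in>A. \<eta> \<le> \<bar>y - a i\<bar>}"
  define U where "U i = {y \<in> {c..c+2}. \<bar>y - a i\<bar> < \<eta>}" for i
  have G_meas: "G \<in> sets lborel" unfolding G_def by measurable
  have U_meas: "U i \<in> sets lborel" for i unfolding U_def by measurable
  have eq: "{c..c+2} = G \<union> (\<Union>i\<in>A. U i)" unfolding G_def U_def by auto
  have U_le: "measure lborel (U i) \<le> 2 * \<eta>" for i
  proof -
    have "U i \<subseteq> {a i - \<eta> <..< a i + \<eta>}" unfolding U_def by auto
    moreover have "{a i - \<eta> <..< a i + \<eta>} \<in> fmeasurable lborel"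
      using eta by (simp add: fmeasurable_def)
    ultimately have "measure lborel (U i) \<le> measure lborel {a i - \<eta> <..< a i + \<eta>}"
      using U_meas by (intro measure_mono_fmeasurable) auto
    also have "\<dots> = 2 * \<eta>" using eta by simp
    finally show ?thesis .
  qed
  have "2 = measure lborel {c..c+2}" by simp
  also have "\<dots> \<le> measure lborel G + measure lborel (\<Union>i\<in>A. U i)"
    unfolding eq using G_meas U_meas A by (intro measure_Un_le) auto
  also have "measure lborel (\<Union>i\<in>A. U i) \<le> (\<Sum>i\<in>A. measure lborel (U i))"
    using U_meas A by (intro measure_UNION_le) auto
  also have "\<dots> \<le> (\<Sum>i\<in>A. 2 * \<eta>)" using U_le by (intro sum_mono) auto
  also have "\<dots> = 2 * \<eta> * card A" by simp
  finally show ?thesis using eta unfolding G_def by linarith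
qed

lemma average_bound:
  fixes g :: "real \<Rightarrow> real" and G :: "real set"
  assumes G: "G \<in> sets lborel" "measure lborel G \<ge> 1" "emeasure lborel G < \<infinity>"
    and g: "integrable lborel g" "\<And>y. g y \<ge> 0"
    and K: "K \<ge> 0" and P: "\<Phi> \<ge> 0"
    and bound: "\<And>y. y \<in> G \<Longrightarrow> \<Phi> \<le> K * g y"
  shows "\<Phi> \<le> K * (\<integral>y. g y \<partial>lborel)"
proof -
  have "\<Phi> \<le> \<Phi> * measure lborel G" using G P by (simp add: mult_le_cancel_left1)
  also have "\<dots> = (\<integral>y. indicator G y * \<Phi> \<partial>lborel)"
    using G by (simp add: integral_indicator)
  also have "\<dots> \<le> (\<integral>y. indicator G y * (K * g y) \<partial>lborel)"
  proof (rule integral_mono)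
    show "integrable lborel (\<lambda>y. indicator G y * \<Phi>)"
      using G by (intro integrable_mult_left integrable_real_indicator) auto
    show "integrable lborel (\<lambda>y. indicator G y * (K * g y))"
      using integrable_mult_indicator[OF G(1) integrable_mult_right[OF g(1)], of K] by simp
  qed (use bound in \<open>auto simp: indicator_def\<close>)
  also have "\<dots> \<le> (\<integral>y. K * g y \<partial>lborel)"
  proof (rule integral_mono)
    show "integrable lborel (\<lambda>y. indicator G y * (K * g y))"
      using integrable_mult_indicator[OF G(1) integrable_mult_right[OF g(1)], of K] by simp
  qed (use g K in \<open>auto simp: indicator_def\<close>)
  also have "\<dots> = K * (\<integral>y. g y \<partial>lborel)" by simp
  finally show ?thesis .
qed


lemma sq_shift_bound:
  fixes u y y' :: real
  assumes "\<bar>y - u\<bar> < 1"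
    and "y' \<in> {(if u \<ge> 0 then u - 3 else u + 1)..(if u \<ge> 0 then u - 3 else u + 1) + 2}"
  shows "y'^2 \<le> y^2 + 9"
proof -
  have "\<bar>y'\<bar> \<le> \<bar>y\<bar> \<or> \<bar>y'\<bar> \<le> 3" using assms by (auto split: if_splits)
  then show ?thesis
  proof
    assume "\<bar>y'\<bar> \<le> \<bar>y\<bar>"
    then have "\<bar>y'\<bar>^2 \<le> \<bar>y\<bar>^2" by (intro power_mono) auto
    then show ?thesis by simp
  next
    assume "\<bar>y'\<bar> \<le> 3"
    then have "\<bar>y'\<bar>^2 \<le> 3^2" by (intro power_mono) auto
    then show ?thesis by (simp add: add_increasing)
  qed
qed

lemma prod_abspow_scale:
  assumes s: "0 \<le> s" and A: "finite A" "card A \<le> m" and K: "1 \<le> K" "K \<le> K'"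
    and b: "\<And>i. i \<in> A \<Longrightarrow> \<bar>t i\<bar> \<le> K * \<bar>t' i\<bar>"
  shows "(\<Prod>i\<in>A. abspow (t i) s) \<le> K' powr (s * m) * (\<Prod>i\<in>A. abspow (t' i) s)"
proof -
  have "(\<Prod>i\<in>A. abspow (t i) s) \<le> (\<Prod>i\<in>A. K powr s * abspow (t' i) s)"
    using b s K by (intro prod_mono conjI abspow_nonneg abspow_scale) auto
  also have "\<dots> = K powr (s * card A) * (\<Prod>i\<in>A. abspow (t' i) s)"
    using K by (simp add: prod.distrib powr_pow_card)
  also have "K powr (s * card A) \<le> K' powr (s * m)"
  proof -
    have "K powr (s * card A) \<le> K powr (s * m)"
      using K s A by (intro powr_mono mult_left_mono) auto
    also have "\<dots> \<le> K' powr (s * m)" using K s by (intro powr_mono2) auto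
    finally show ?thesis .
  qed
  finally show ?thesis by (auto intro: mult_right_mono prod_nonneg abspow_nonneg)
qed

lemma anticonc:
  assumes s: "0 \<le> s" and A: "finite A" "card A \<le> m" and m: "1 \<le> m" and r: "0 < r" "r \<le> 1"
  shows "(\<integral>y. indicator {u-r<..<u+r} y * g1 s a A y \<partial>lborel)
     \<le> 2 * r * exp (9/2) * (17 * real m) powr (s * m) * (\<integral>y. g1 s a A y \<partial>lborel)"
proof -
  define \<eta> :: real where "\<eta> = 1 / (4 * m)"
  define c where "c = (if u \<ge> 0 then u - 3 else u + 1)"
  define G where "G = {y \<in> {c..c+2}. \<forall>i\<in>A. \<eta> \<le> \<bar>y - a i\<bar>}"
  define Q where "Q = (17 * real m) powr (s * m)"
  have eta: "0 < \<eta>" using m by (simp add: \<eta>_def)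
  have "2 * \<eta> * card A \<le> 1" using A m by (simp add: \<eta>_def field_simps)
  then have G1: "measure lborel G \<ge> 1" unfolding G_def using good_set_measure[OF A(1) eta] by blast
  have G_meas: "G \<in> sets lborel" unfolding G_def by measurable
  have G_fin: "emeasure lborel G < \<infinity>"
  proof -
    have "emeasure lborel G \<le> emeasure lborel {c..c+2}" unfolding G_def by (intro emeasure_mono) auto
    also have "\<dots> < \<infinity>" by simp
    finally show ?thesis .
  qed
  have int: "integrable lborel (g1 s a A)" using g1_integrable[OF s A(1)] .
  have int_ind: "integrable lborel (\<lambda>y. indicator {u-r<..<u+r} y * g1 s a A y)"
    using integrable_mult_indicator[OF _ int, of "{u-r<..<u+r}"] by simp
  have Q1: "Q \<ge> 0" unfolding Q_def by simp
  have pt: "g1 s a A y \<le> exp (9/2) * Q * g1 s a A y'" if y: "\<bar>y - u\<bar> < 1" and y': "y' \<in> G" for y y'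
  proof -
    have y'c: "y' \<in> {c..c+2}" using y' unfolding G_def by auto
    have sq: "y'^2 \<le> y^2 + 9" using sq_shift_bound[OF y] y'c unfolding c_def by auto
    have e: "exp (-(y^2)/2) \<le> exp (9/2) * exp (-(y'^2)/2)"
      unfolding exp_add[symmetric] using sq by simp
    have "(\<Prod>i\<in>A. abspow (y - a i) s) \<le> Q * (\<Prod>i\<in>A. abspow (y' - a i) s)"
      unfolding Q_def
    proof (rule prod_abspow_scale[OF s A, of "1 + 16 * real m"])
      show "1 \<le> 1 + 16 * real m" by simp
      show "1 + 16 * real m \<le> 17 * real m" using m by simp
      fix i assume i: "i \<in> A"
      have d: "\<bar>y - y'\<bar> \<le> 4" using y y'c unfolding c_def by (auto split: if_splits)
      have "\<eta> \<le> \<bar>y' - a i\<bar>" using y' i unfolding G_def by auto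
      then have "4 \<le> 16 * real m * \<bar>y' - a i\<bar>" using m unfolding \<eta>_def by (simp add: field_simps)
      then show "\<bar>y - a i\<bar> \<le> (1 + 16 * real m) * \<bar>y' - a i\<bar>" using d by (simp add: algebra_simps)
    qed
    then have "g1 s a A y \<le> (exp (9/2) * exp (-(y'^2)/2)) * (Q * (\<Prod>i\<in>A. abspow (y' - a i) s))"
      unfolding g1_def using e by (intro mult_mono) (auto intro: prod_nonneg abspow_nonneg)
    then show ?thesis unfolding g1_def by (simp add: mult_ac)
  qed
  have "(\<integral>y. indicator {u-r<..<u+r} y * g1 s a A y \<partial>lborel) \<le> (2 * r * exp (9/2) * Q) * (\<integral>y. g1 s a A y \<partial>lborel)"
  proof (rule average_bound[OF G_meas G1 G_fin int g1_nonneg])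
    show "0 \<le> 2 * r * exp (9/2) * Q" using r Q1 by simp
    show "0 \<le> (\<integral>y. indicator {u-r<..<u+r} y * g1 s a A y \<partial>lborel)"
      by (intro integral_nonneg_AE AE_I2) (auto simp: g1_nonneg)
    fix y' assume y': "y' \<in> G"
    have "(\<integral>y. indicator {u-r<..<u+r} y * g1 s a A y \<partial>lborel)
        \<le> (\<integral>y. indicator {u-r<..<u+r} y * (exp (9/2) * Q * g1 s a A y') \<partial>lborel)"
    proof (rule integral_mono[OF int_ind])
      show "integrable lborel (\<lambda>y. indicator {u-r<..<u+r} y * (exp (9/2) * Q * g1 s a A y'))"
        using r by (intro integrable_mult_left integrable_real_indicator) auto
      fix y show "indicator {u-r<..<u+r} y * g1 s a A y \<le> indicator {u-r<..<u+r} y * (exp (9/2) * Q * g1 s a A y')"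
        using pt[OF _ y', of y] r by (auto simp: indicator_def abs_less_iff)
    qed
    also have "\<dots> = 2 * r * exp (9/2) * Q * g1 s a A y'"
      using r by simp
    finally show "(\<integral>y. indicator {u-r<..<u+r} y * g1 s a A y \<partial>lborel) \<le> 2 * r * exp (9/2) * Q * g1 s a A y'" .
  qed
  then show ?thesis unfolding Q_def .
qed


definition C3 :: real where "C3 = (\<integral>y. exp (-(y^2)/2) * (1 + \<bar>y\<bar>) ^ 3 \<partial>lborel)"

lemma C3_nonneg: "C3 \<ge> 0" unfolding C3_def by (intro integral_nonneg_AE AE_I2) auto

lemma abspow_pos_base: "0 < t \<Longrightarrow> abspow t s = t powr s"
  by (simp add: abspow_def)

lemma moment_bound:
  fixes s :: real
  assumes s: "0 \<le> s" and A: "finite A" "card A \<le> m" and m: "1 \<le> m" and sm: "s * real m \<le> 1"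
  shows "(\<integral>y. (1 + \<bar>y\<bar>)^2 * g1 s a A y \<partial>lborel)
     \<le> C3 * exp (1/2) * (17 * real m) powr (s * m) * (\<integral>y. g1 s a A y \<partial>lborel)"
proof -
  define \<eta> :: real where "\<eta> = 1 / (4 * m)"
  define G where "G = {y \<in> {-1..-1+2}. \<forall>i\<in>A. \<eta> \<le> \<bar>y - a i\<bar>}"
  define Q where "Q = (17 * real m) powr (s * m)"
  define Aa where "Aa = (\<Prod>i\<in>A. (1 + \<bar>a i\<bar>) powr s)"
  have Aa0: "Aa \<ge> 0" unfolding Aa_def by (intro prod_nonneg) auto
  have eta: "0 < \<eta>" using m by (simp add: \<eta>_def)
  have "2 * \<eta> * card A \<le> 1" using A m by (simp add: \<eta>_def field_simps)
  then have G1: "measure lborel G \<ge> 1" unfolding G_def using good_set_measure[OF A(1) eta] by blast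
  have G_meas: "G \<in> sets lborel" unfolding G_def by measurable
  have G_fin: "emeasure lborel G < \<infinity>"
  proof -
    have "emeasure lborel G \<le> emeasure lborel {-1..-1+2::real}" unfolding G_def by (intro emeasure_mono) auto
    also have "\<dots> < \<infinity>" by simp
    finally show ?thesis .
  qed
  have int: "integrable lborel (g1 s a A)" using g1_integrable[OF s A(1)] .
  have intC: "integrable lborel (\<lambda>y. Aa * (exp (-(y^2)/2) * (1 + \<bar>y\<bar>) ^ 3))"
    using gauss_poly_integrable by auto
  have ptu: "(1 + \<bar>y\<bar>)^2 * g1 s a A y \<le> Aa * (exp (-(y^2)/2) * (1 + \<bar>y\<bar>) ^ 3)" for y
  proof -
    have "(1 + \<bar>y\<bar>) powr (s * card A) \<le> (1 + \<bar>y\<bar>) powr 1"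
      using s A sm mult_left_mono[of "real (card A)" "real m" s] by (intro powr_mono) auto
    then have p: "(1 + \<bar>y\<bar>) powr (s * card A) \<le> 1 + \<bar>y\<bar>" by simp
    have "(1 + \<bar>y\<bar>)^2 * g1 s a A y \<le> (1 + \<bar>y\<bar>)^2 * (exp (-(y^2)/2) * (1 + \<bar>y\<bar>) powr (s * card A) * Aa)"
      using g1_upper[OF s A(1), of a y] unfolding Aa_def by (intro mult_left_mono) auto
    also have "\<dots> \<le> (1 + \<bar>y\<bar>)^2 * (exp (-(y^2)/2) * (1 + \<bar>y\<bar>) * Aa)"
      using p Aa0 by (intro mult_left_mono mult_right_mono) auto
    also have "\<dots> = Aa * (exp (-(y^2)/2) * (1 + \<bar>y\<bar>) ^ 3)" by (simp add: power2_eq_square power3_eq_cube)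
    finally show ?thesis .
  qed
  have int2: "integrable lborel (\<lambda>y. (1 + \<bar>y\<bar>)^2 * g1 s a A y)"
    using intC
  proof (rule Bochner_Integration.integrable_bound)
    show "AE y in lborel. norm ((1 + \<bar>y\<bar>)^2 * g1 s a A y) \<le> norm (Aa * (exp (-(y^2)/2) * (1 + \<bar>y\<bar>) ^ 3))"
      using ptu g1_nonneg Aa0 by (intro AE_I2) (auto simp: abs_mult)
  qed measurable
  have up: "(\<integral>y. (1 + \<bar>y\<bar>)^2 * g1 s a A y \<partial>lborel) \<le> C3 * Aa"
  proof -
    have "(\<integral>y. (1 + \<bar>y\<bar>)^2 * g1 s a A y \<partial>lborel) \<le> (\<integral>y. Aa * (exp (-(y^2)/2) * (1 + \<bar>y\<bar>) ^ 3) \<partial>lborel)"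
      using int2 intC ptu by (intro integral_mono) auto
    also have "\<dots> = C3 * Aa" unfolding C3_def by simp
    finally show ?thesis .
  qed
  have low: "Aa \<le> exp (1/2) * Q * (\<integral>y. g1 s a A y \<partial>lborel)"
  proof (rule average_bound[OF G_meas G1 G_fin int g1_nonneg])
    show "0 \<le> exp (1/2) * Q" unfolding Q_def by simp
    show "0 \<le> Aa" by (rule Aa0)
    fix y' assume y': "y' \<in> G"
    have y'1: "\<bar>y'\<bar> \<le> 1" using y' unfolding G_def by auto
    have "Aa = (\<Prod>i\<in>A. abspow (1 + \<bar>a i\<bar>) s)" unfolding Aa_def
      by (intro prod.cong refl) (simp add: abspow_pos_base add_pos_nonneg)
    also have "\<dots> \<le> Q * (\<Prod>i\<in>A. abspow (y' - a i) s)"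
      unfolding Q_def
    proof (rule prod_abspow_scale[OF s A, of "12 * real m"])
      show "1 \<le> 12 * real m" using m by simp
      show "12 * real m \<le> 17 * real m" by simp
      fix i assume i: "i \<in> A"
      have e: "\<eta> \<le> \<bar>y' - a i\<bar>" using y' i unfolding G_def by auto
      show "\<bar>1 + \<bar>a i\<bar>\<bar> \<le> 12 * real m * \<bar>y' - a i\<bar>"
      proof (cases "\<bar>a i\<bar> \<ge> 2")
        case True
        then have "\<bar>y' - a i\<bar> \<ge> \<bar>a i\<bar> - 1" using y'1 by linarith
        moreover have "(1 + \<bar>a i\<bar>) \<le> 3 * (\<bar>a i\<bar> - 1)" using True by (simp add: algebra_simps)
        moreover have "3 * \<bar>y' - a i\<bar> \<le> 12 * real m * \<bar>y' - a i\<bar>" using m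
          by (intro mult_right_mono) auto
        ultimately show ?thesis by simp
      next
        case False
        have "3 \<le> 12 * real m * \<bar>y' - a i\<bar>" using e m unfolding \<eta>_def by (simp add: field_simps)
        then show ?thesis using False by simp
      qed
    qed
    also have "\<dots> \<le> Q * (exp (1/2) * g1 s a A y')"
    proof -
      have "exp (-(1/2)) \<le> exp (-(y'^2)/2)"
      proof -
        have "\<bar>y'\<bar>^2 \<le> 1^2" using y'1 by (intro power_mono) auto
        then have "y'^2 \<le> 1^2" by simp
        then show ?thesis by simp
      qed
      then have "1 \<le> exp (1/2) * exp (-(y'^2)/2)" by (simp add: exp_minus field_simps)
      then have "(\<Prod>i\<in>A. abspow (y' - a i) s) \<le> exp (1/2) * exp (-(y'^2)/2) * (\<Prod>i\<in>A. abspow (y' - a i) s)"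
        using mult_right_mono[OF _ prod_nonneg[of A "\<lambda>i. abspow (y' - a i) s"], of 1 "exp (1/2) * exp (-(y'^2)/2)"]
        by (simp add: abspow_nonneg)
      then show ?thesis unfolding g1_def Q_def by (intro mult_left_mono) (simp_all add: mult_ac)
    qed
    finally show "Aa \<le> exp (1/2) * Q * g1 s a A y'" by (simp add: mult_ac)
  qed
  have "(\<integral>y. (1 + \<bar>y\<bar>)^2 * g1 s a A y \<partial>lborel) \<le> C3 * (exp (1/2) * Q * (\<integral>y. g1 s a A y \<partial>lborel))"
    using up low C3_nonneg by (meson mult_left_mono order.trans)
  then show ?thesis unfolding Q_def by (simp add: mult_ac)
qed

definition VP :: "nat \<Rightarrow> (nat \<times> nat) set" where "VP m = Sigma {..<m} (\<lambda>i. {i<..<m})"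

lemma VP_finite[simp]: "finite (VP m)"
  unfolding VP_def by auto

lemma beta_dens_VP: "beta_dens m s l = exp (-(1/2) * (\<Sum>i<m. (l i)^2)) *
    (\<Prod>p\<in>VP m. abspow (l (fst p) - l (snd p)) s)"
  unfolding beta_dens_def VP_def by (simp add: prod.Sigma split_def)

lemma beta_dens_nonneg: "beta_dens m s l \<ge> 0"
  unfolding beta_dens_def by (intro mult_nonneg_nonneg prod_nonneg) (auto simp: abspow_nonneg)

lemma beta_dens_measurable[measurable]: "beta_dens m s \<in> borel_measurable (RmMeasure m)"
  unfolding beta_dens_def RmMeasure_def by measurable

definition Rj :: "nat \<Rightarrow> real \<Rightarrow> nat \<Rightarrow> (nat \<Rightarrow> real) \<Rightarrow> real" where
  "Rj m s j x = exp (-(1/2) * (\<Sum>i\<in>{..<m}-{j}. (x i)^2)) *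
     (\<Prod>p\<in>{p\<in>VP m. fst p \<noteq> j \<and> snd p \<noteq> j}. abspow (x (fst p) - x (snd p)) s)"

lemma Rj_nonneg: "Rj m s j x \<ge> 0"
  unfolding Rj_def by (intro mult_nonneg_nonneg prod_nonneg) (auto simp: abspow_nonneg)

lemma dens_split:
  assumes j: "j < m"
  shows "beta_dens m s (x(j:=y)) = Rj m s j x * g1 s x ({..<m}-{j}) y"
proof -
  let ?l = "x(j:=y)"
  let ?F = "\<lambda>p. abspow (?l (fst p) - ?l (snd p)) s"
  have sum: "(\<Sum>i<m. (?l i)^2) = y^2 + (\<Sum>i\<in>{..<m}-{j}. (x i)^2)"
    using j by (subst sum.remove[of _ j]) (auto intro!: sum.cong)
  define B where "B = {p::nat\<times>nat. fst p = j \<or> snd p = j}"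
  have split: "(\<Prod>p\<in>VP m. ?F p) = (\<Prod>p\<in>VP m \<inter> B. ?F p) * (\<Prod>p\<in>VP m - B. ?F p)"
    by (rule prod.Int_Diff) simp
  have rest: "(\<Prod>p\<in>VP m - B. ?F p) = (\<Prod>p\<in>{p\<in>VP m. fst p \<noteq> j \<and> snd p \<noteq> j}. abspow (x (fst p) - x (snd p)) s)"
    unfolding B_def by (intro prod.cong) auto
  define \<phi> where "\<phi> i = (if i < j then (i, j) else (j, i))" for i
  have bij: "bij_betw \<phi> ({..<m}-{j}) (VP m \<inter> B)"
  proof (rule bij_betw_byWitness[where f'="\<lambda>p. if fst p = j then snd p else fst p"])
    show "\<forall>a\<in>{..<m} - {j}. (if fst (\<phi> a) = j then snd (\<phi> a) else fst (\<phi> a)) = a"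
      unfolding \<phi>_def by auto
    show "\<forall>a'\<in>VP m \<inter> B. \<phi> (if fst a' = j then snd a' else fst a') = a'"
      unfolding \<phi>_def B_def VP_def by auto
    show "\<phi> ` ({..<m} - {j}) \<subseteq> VP m \<inter> B"
      unfolding \<phi>_def B_def VP_def using j by auto
    show "(\<lambda>p. if fst p = j then snd p else fst p) ` (VP m \<inter> B) \<subseteq> {..<m} - {j}"
      unfolding B_def VP_def by auto
  qed
  have jpart: "(\<Prod>p\<in>VP m \<inter> B. ?F p) = (\<Prod>i\<in>{..<m}-{j}. abspow (y - x i) s)"
  proof -
    have "(\<Prod>p\<in>VP m \<inter> B. ?F p) = (\<Prod>i\<in>{..<m}-{j}. ?F (\<phi> i))"
      using prod.reindex_bij_betw[OF bij, of ?F] by simp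
    also have "\<dots> = (\<Prod>i\<in>{..<m}-{j}. abspow (y - x i) s)"
      unfolding \<phi>_def by (intro prod.cong refl) (auto simp: abspow_sym)
    finally show ?thesis .
  qed
  have e: "exp (-(1/2) * (y^2 + (\<Sum>i\<in>{..<m}-{j}. (x i)^2))) = exp (-(y^2)/2) * exp (-(1/2) * (\<Sum>i\<in>{..<m}-{j}. (x i)^2))"
    by (simp add: exp_add[symmetric] field_simps)
  show ?thesis
    unfolding beta_dens_VP Rj_def g1_def sum split rest jpart e by (simp add: mult_ac)
qed

lemma one_plus_sum_le_prod:
  assumes "finite A" "\<And>i. i \<in> A \<Longrightarrow> (z i :: real) \<ge> 0"
  shows "1 + (\<Sum>i\<in>A. z i) \<le> (\<Prod>i\<in>A. 1 + z i)"
  using assms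
proof (induction A rule: finite_induct)
  case (insert a A)
  have "1 + (\<Sum>i\<in>insert a A. z i) = z a + (1 + (\<Sum>i\<in>A. z i))" using insert by simp
  also have "\<dots> \<le> z a * (\<Prod>i\<in>A. 1 + z i) + (\<Prod>i\<in>A. 1 + z i)"
  proof -
    have "1 \<le> (\<Prod>i\<in>A. 1 + z i)" using insert by (intro prod_ge_1) auto
    then have "z a \<le> z a * (\<Prod>i\<in>A. 1 + z i)" using insert mult_left_mono[of 1 "\<Prod>i\<in>A. 1 + z i" "z a"] by simp
    then show ?thesis using insert by simp
  qed
  also have "\<dots> = (\<Prod>i\<in>insert a A. 1 + z i)" using insert by (simp add: algebra_simps)
  finally show ?case .
qed simp

lemma dens_bound:
  assumes s: "0 \<le> s" and j: "j < m" and h: "\<bar>h (l j)\<bar> \<le> (1 + \<bar>l j\<bar>)^2"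
  shows "\<bar>h (l j) * beta_dens m s l\<bar> \<le>
     (\<Prod>k<m. exp (-((l k)^2)/2) * (1 + \<bar>l k\<bar>) powr (s * card (VP m) + 2))"
proof -
  define W where "W = (\<Prod>k<m. 1 + \<bar>l k\<bar>)"
  have TW: "1 + (\<Sum>k<m. \<bar>l k\<bar>) \<le> W" unfolding W_def by (rule one_plus_sum_le_prod) auto
  have "0 \<le> (\<Sum>k<m. \<bar>l k\<bar>)" by (intro sum_nonneg) auto
  then have W1: "1 \<le> W" using TW by linarith
  have pair: "\<bar>l (fst p) - l (snd p)\<bar> \<le> W" if p: "p \<in> VP m" for p
  proof -
    have "\<bar>l (fst p)\<bar> + \<bar>l (snd p)\<bar> = (\<Sum>k\<in>{fst p, snd p}. \<bar>l k\<bar>)"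
      using p by (auto simp: VP_def)
    also have "\<dots> \<le> (\<Sum>k<m. \<bar>l k\<bar>)" using p by (intro sum_mono2) (auto simp: VP_def)
    finally show ?thesis using TW by linarith
  qed
  have V: "(\<Prod>p\<in>VP m. abspow (l (fst p) - l (snd p)) s) \<le> W powr (s * card (VP m))"
  proof -
    have "(\<Prod>p\<in>VP m. abspow (l (fst p) - l (snd p)) s) \<le> (\<Prod>p\<in>VP m. W powr s)"
      using pair W1 s by (intro prod_mono conjI abspow_nonneg abspow_le) auto
    also have "\<dots> = W powr (s * card (VP m))" using W1 by (simp add: powr_pow_card)
    finally show ?thesis .
  qed
  have hW: "\<bar>h (l j)\<bar> \<le> W^2"
  proof -
    have "\<bar>l j\<bar> \<le> (\<Sum>k<m. \<bar>l k\<bar>)" using j by (intro member_le_sum) auto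
    then have "1 + \<bar>l j\<bar> \<le> W" using TW by linarith
    then have "(1 + \<bar>l j\<bar>)^2 \<le> W^2" by (intro power_mono) auto
    then show ?thesis using h by linarith
  qed
  have "\<bar>h (l j) * beta_dens m s l\<bar> = \<bar>h (l j)\<bar> * beta_dens m s l"
    by (simp add: abs_mult beta_dens_nonneg)
  also have "\<dots> \<le> W^2 * (exp (-(1/2) * (\<Sum>i<m. (l i)^2)) * W powr (s * card (VP m)))"
    unfolding beta_dens_VP using hW V prod_nonneg[of "VP m" "\<lambda>p. abspow (l (fst p) - l (snd p)) s"]
    by (intro mult_mono mult_left_mono) (auto simp: abspow_nonneg)
  also have "\<dots> = exp (-(1/2) * (\<Sum>i<m. (l i)^2)) * W powr (s * card (VP m) + 2)"
  proof -
    have "W powr (s * card (VP m) + 2) = W powr (s * card (VP m)) * W^2"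
      using W1 by (simp add: powr_add powr_numeral)
    then show ?thesis by simp
  qed
  also have "\<dots> = (\<Prod>k<m. exp (-((l k)^2)/2) * (1 + \<bar>l k\<bar>) powr (s * card (VP m) + 2))"
  proof -
    have "-(1/2) * (\<Sum>i<m. (l i)^2) = (\<Sum>k<m. -((l k)^2)/2)"
      by (simp add: sum_negf sum_divide_distrib)
    then have "exp (-(1/2) * (\<Sum>i<m. (l i)^2)) = (\<Prod>k<m. exp (-((l k)^2)/2))"
      by (simp add: exp_sum)
    moreover have "W powr (s * card (VP m) + 2) = (\<Prod>k<m. (1 + \<bar>l k\<bar>) powr (s * card (VP m) + 2))"
      unfolding W_def by (rule prod_powr_distrib)
    ultimately show ?thesis by (simp add: prod.distrib)
  qed
  finally show ?thesis .
qed


lemma comp_measurable_j: "j < m \<Longrightarrow> (\<lambda>l. l j) \<in> measurable (RmMeasure m) borel"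
  using measurable_component_singleton[of j "{..<m}" "\<lambda>_. lborel :: real measure"] by (simp add: RmMeasure_def)

lemma dens_h_integrable:
  assumes s: "0 \<le> s" and j: "j < m" and hm: "h \<in> borel_measurable borel"
    and hb: "\<And>y. \<bar>h y\<bar> \<le> (1 + \<bar>y\<bar>)^2"
  shows "integrable (RmMeasure m) (\<lambda>l. h (l j) * beta_dens m s l)"
proof -
  interpret product_sigma_finite "\<lambda>_::nat. lborel :: real measure" by standard
  define c where "c = s * card (VP m) + 2"
  have c: "0 \<le> c" using s by (simp add: c_def)
  have gi: "integrable lborel (\<lambda>y. exp (-(y^2)/2) * (1 + \<bar>y\<bar>) powr c)"
    using gauss_powr_integrable[OF c] .
  have int: "integrable (Pi\<^sub>M {..<m} (\<lambda>_. lborel)) (\<lambda>l. \<Prod>k\<in>{..<m}. exp (-((l k)^2)/2) * (1 + \<bar>l k\<bar>) powr c)"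
    by (rule product_integrable_prod[where f="\<lambda>_ y. exp (-(y^2)/2) * (1 + \<bar>y\<bar>) powr c"])
       (use gi in auto)
  have hm': "(\<lambda>l. h (l j)) \<in> borel_measurable (RmMeasure m)"
    using measurable_compose[OF comp_measurable_j[OF j] hm] by simp
  show ?thesis
    using int unfolding RmMeasure_def[symmetric]
  proof (rule Bochner_Integration.integrable_bound)
    show "AE l in RmMeasure m. norm (h (l j) * beta_dens m s l) \<le> norm (\<Prod>k\<in>{..<m}. exp (-((l k)^2)/2) * (1 + \<bar>l k\<bar>) powr c)"
    proof (intro AE_I2)
      fix l :: "nat \<Rightarrow> real"
      have "0 \<le> (\<Prod>k\<in>{..<m}. exp (-((l k)^2)/2) * (1 + \<bar>l k\<bar>) powr c)"
        by (intro prod_nonneg) auto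
      then show "norm (h (l j) * beta_dens m s l) \<le> norm (\<Prod>k\<in>{..<m}. exp (-((l k)^2)/2) * (1 + \<bar>l k\<bar>) powr c)"
        using dens_bound[OF s j, of h l] hb unfolding c_def by simp
    qed
  qed (use hm' in measurable)
qed

lemma dens_integrable:
  assumes s: "0 \<le> s" and j: "j < m"
  shows "integrable (RmMeasure m) (beta_dens m s)"
  using dens_h_integrable[OF s j, of "\<lambda>_. 1"] by (simp add: one_le_power)

lemma fubini_bound:
  assumes s: "0 \<le> s" and j: "j < m" and hm: "h \<in> borel_measurable borel"
    and hb: "\<And>y. \<bar>h y\<bar> \<le> (1 + \<bar>y\<bar>)^2"
    and Hi: "\<And>a. integrable lborel (\<lambda>y. h y * g1 s a ({..<m}-{j}) y)"
    and H: "\<And>a. (\<integral>y. h y * g1 s a ({..<m}-{j}) y \<partial>lborel) \<le> K * (\<integral>y. g1 s a ({..<m}-{j}) y \<partial>lborel)"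
  shows "(\<integral>l. h (l j) * beta_dens m s l \<partial>RmMeasure m) \<le> K * (\<integral>l. beta_dens m s l \<partial>RmMeasure m)"
proof -
  interpret product_sigma_finite "\<lambda>_::nat. lborel :: real measure" by standard
  define I where "I = {..<m} - {j}"
  have Ieq: "{..<m} = insert j I" using j unfolding I_def by auto
  define f where "f l = K * beta_dens m s l - h (l j) * beta_dens m s l" for l
  have iD: "integrable (RmMeasure m) (beta_dens m s)" by (rule dens_integrable[OF s j])
  have ihD: "integrable (RmMeasure m) (\<lambda>l. h (l j) * beta_dens m s l)" by (rule dens_h_integrable[OF s j hm hb])
  have intf: "integrable (RmMeasure m) f" unfolding f_def using iD ihD by auto
  have eqf: "(\<integral>l. f l \<partial>RmMeasure m) = (\<integral>x. (\<integral>y. f (x(j:=y)) \<partial>lborel) \<partial>Pi\<^sub>M I (\<lambda>_. lborel))"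
    using intf unfolding RmMeasure_def Ieq
    by (intro product_integral_insert) (auto simp: I_def)
  have pw: "0 \<le> (\<integral>y. f (x(j:=y)) \<partial>lborel)" for x :: "nat \<Rightarrow> real"
  proof -
    have fx: "f (x(j:=y)) = Rj m s j x * (K * g1 s x I y - h y * g1 s x I y)" for y
      unfolding f_def dens_split[OF j] I_def by (simp add: algebra_simps)
    have i1: "integrable lborel (g1 s x I)" by (rule g1_integrable[OF s]) (simp add: I_def)
    have e1: "(\<integral>y. f (x(j:=y)) \<partial>lborel) = Rj m s j x * (K * (\<integral>y. g1 s x I y \<partial>lborel) - (\<integral>y. h y * g1 s x I y \<partial>lborel))"
      unfolding fx using i1 Hi[of x] unfolding I_def by simp
    have "0 \<le> Rj m s j x * (K * (\<integral>y. g1 s x I y \<partial>lborel) - (\<integral>y. h y * g1 s x I y \<partial>lborel))"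
      using H[of x] Rj_nonneg[of m s j x] unfolding I_def by (intro mult_nonneg_nonneg) auto
    then show "0 \<le> (\<integral>y. f (x(j:=y)) \<partial>lborel)" using e1 by simp
  qed
  have "(\<integral>x. (\<integral>y. f (x(j:=y)) \<partial>lborel) \<partial>Pi\<^sub>M I (\<lambda>_. lborel)) \<ge> 0"
    by (intro integral_nonneg_AE AE_I2 pw)
  then have "0 \<le> (\<integral>l. f l \<partial>RmMeasure m)" using eqf by simp
  also have "(\<integral>l. f l \<partial>RmMeasure m) = K * (\<integral>l. beta_dens m s l \<partial>RmMeasure m) - (\<integral>l. h (l j) * beta_dens m s l \<partial>RmMeasure m)"
    unfolding f_def using iD ihD by simp
  finally show ?thesis by simp
qed


lemma Z_pos:
  assumes s: "0 \<le> s" and m: "1 \<le> m"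
  shows "beta_Z m s > 0"
proof -
  interpret product_sigma_finite "\<lambda>_::nat. lborel :: real measure" by standard
  define S where "S = (\<Pi>\<^sub>E k\<in>{..<m}. {real (3*k)..real (3*k) + 1})"
  define c0 where "c0 = exp (-(1/2) * (\<Sum>k<m. (real (3*k) + 1)^2))"
  have S_sets: "S \<in> sets (RmMeasure m)" unfolding S_def RmMeasure_def
    by (intro sets_PiM_I_finite) auto
  have S_em: "emeasure (RmMeasure m) S = 1" unfolding S_def RmMeasure_def
    by (subst emeasure_PiM) auto
  then have S_m: "measure (RmMeasure m) S = 1" by (simp add: measure_def)
  have pt: "c0 \<le> beta_dens m s l" if l: "l \<in> S" for l
  proof -
    have lk: "real (3*k) \<le> l k \<and> l k \<le> real (3*k) + 1" if "k < m" for k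
      using l that unfolding S_def by (auto simp: PiE_iff)
    have "(\<Sum>k<m. (l k)^2) \<le> (\<Sum>k<m. (real (3*k) + 1)^2)"
    proof (intro sum_mono power_mono)
      fix k assume "k \<in> {..<m}" then show "0 \<le> l k" "l k \<le> real (3*k) + 1" using lk[of k] by auto
    qed
    then have e: "c0 \<le> exp (-(1/2) * (\<Sum>k<m. (l k)^2))" unfolding c0_def by simp
    have "1 \<le> (\<Prod>i<m. \<Prod>j\<in>{i<..<m}. abspow (l i - l j) s)"
    proof (intro prod_ge_1 ballI)
      fix i j assume i: "i \<in> {..<m}" and j: "j \<in> {i<..<m}"
      have "1 \<le> \<bar>l i - l j\<bar>" using lk[of i] lk[of j] i j by auto
      then have "1 powr s \<le> abspow (l i - l j) s" using s by (intro abspow_ge) auto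
      then show "1 \<le> abspow (l i - l j) s" by simp
    qed
    then have "c0 * 1 \<le> exp (-(1/2) * (\<Sum>k<m. (l k)^2)) * (\<Prod>i<m. \<Prod>j\<in>{i<..<m}. abspow (l i - l j) s)"
      using e by (intro mult_mono) (auto simp: c0_def)
    then show ?thesis unfolding beta_dens_def by simp
  qed
  have "0 < c0" unfolding c0_def by simp
  also have "c0 = (\<integral>l. indicator S l * c0 \<partial>RmMeasure m)"
    using S_sets S_em S_m by simp
  also have "\<dots> \<le> (\<integral>l. beta_dens m s l \<partial>RmMeasure m)"
  proof (rule integral_mono)
    show "integrable (RmMeasure m) (\<lambda>l. indicator S l * c0)"
      using S_sets S_em by (intro integrable_mult_left integrable_real_indicator) auto
    show "integrable (RmMeasure m) (beta_dens m s)" using dens_integrable[OF s, of 0 m] m by simp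
    fix l show "indicator S l * c0 \<le> beta_dens m s l"
      using pt[of l] beta_dens_nonneg[of m s l] by (auto simp: indicator_def)
  qed
  finally show ?thesis unfolding beta_Z_def .
qed

lemma g1_moment_integrable:
  assumes s: "0 \<le> s" and A: "finite A"
  shows "integrable lborel (\<lambda>y. (1 + \<bar>y\<bar>)^2 * g1 s a A y)"
proof -
  define Aa where "Aa = (\<Prod>i\<in>A. (1 + \<bar>a i\<bar>) powr s)"
  define q where "q = s * card A + 2"
  have q: "0 \<le> q" using s by (simp add: q_def)
  have Aa0: "Aa \<ge> 0" unfolding Aa_def by (intro prod_nonneg) auto
  have gi: "integrable lborel (\<lambda>y. exp (-(y^2)/2) * (1 + \<bar>y\<bar>) powr q)"
    using gauss_powr_integrable[OF q] .
  have "integrable lborel (\<lambda>y. Aa * (exp (-(y^2)/2) * (1 + \<bar>y\<bar>) powr q))"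
    using gi by simp
  then show ?thesis
  proof (rule Bochner_Integration.integrable_bound)
    show "AE y in lborel. norm ((1 + \<bar>y\<bar>)^2 * g1 s a A y) \<le> norm (Aa * (exp (-(y^2)/2) * (1 + \<bar>y\<bar>) powr q))"
    proof (intro AE_I2)
      fix y :: real
      have p: "(1 + \<bar>y\<bar>) powr q = (1 + \<bar>y\<bar>) powr (s * card A) * (1 + \<bar>y\<bar>)^2"
        unfolding q_def by (simp add: powr_add powr_numeral add_pos_nonneg)
      have "(1 + \<bar>y\<bar>)^2 * g1 s a A y \<le> (1 + \<bar>y\<bar>)^2 * (exp (-(y^2)/2) * (1 + \<bar>y\<bar>) powr (s * card A) * Aa)"
        using g1_upper[OF s A, of a y] unfolding Aa_def by (intro mult_left_mono) auto
      also have "\<dots> = Aa * (exp (-(y^2)/2) * (1 + \<bar>y\<bar>) powr q)" unfolding p by (simp add: mult_ac)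
      finally show "norm ((1 + \<bar>y\<bar>)^2 * g1 s a A y) \<le> norm (Aa * (exp (-(y^2)/2) * (1 + \<bar>y\<bar>) powr q))"
        using g1_nonneg[of s a A y] Aa0 by (simp add: abs_mult)
    qed
  qed measurable
qed

lemma E_anticonc:
  assumes s: "0 \<le> s" and j: "j < m" and r: "0 < r" "r \<le> 1"
  shows "(\<integral>l. indicator {u-r<..<u+r} (l j) * beta_dens m s l \<partial>RmMeasure m)
     \<le> 2 * r * exp (9/2) * (17 * real m) powr (s * m) * beta_Z m s"
  unfolding beta_Z_def
proof (rule fubini_bound[OF s j])
  show "indicator {u-r<..<u+r} \<in> borel_measurable (borel :: real measure)" by measurable
  show "\<bar>indicator {u-r<..<u+r} y\<bar> \<le> (1 + \<bar>y\<bar>)^2" for y :: real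
    by (auto simp: indicator_def one_le_power)
  fix a
  show "integrable lborel (\<lambda>y. indicator {u-r<..<u+r} y * g1 s a ({..<m}-{j}) y)"
    using integrable_mult_indicator[OF _ g1_integrable[OF s], of "{u-r<..<u+r}" "{..<m}-{j}" a] by simp
  show "(\<integral>y. indicator {u-r<..<u+r} y * g1 s a ({..<m}-{j}) y \<partial>lborel)
       \<le> 2 * r * exp (9/2) * (17 * real m) powr (s * m) * (\<integral>y. g1 s a ({..<m}-{j}) y \<partial>lborel)"
    using j r by (intro anticonc[OF s]) auto
qed

lemma E_moment:
  fixes s :: real
  assumes s: "0 \<le> s" and j: "j < m" and sm: "s * real m \<le> 1"
  shows "(\<integral>l. (1 + \<bar>l j\<bar>)^2 * beta_dens m s l \<partial>RmMeasure m)
     \<le> C3 * exp (1/2) * (17 * real m) powr (s * m) * beta_Z m s"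
  unfolding beta_Z_def
proof (rule fubini_bound[OF s j, where h="\<lambda>y. (1 + \<bar>y\<bar>)^2"])
  show "(\<lambda>y::real. (1 + \<bar>y\<bar>)^2) \<in> borel_measurable borel" by measurable
  show "\<bar>(1 + \<bar>y\<bar>)^2\<bar> \<le> (1 + \<bar>y\<bar>)^2" for y :: real by simp
  fix a
  show "integrable lborel (\<lambda>y. (1 + \<bar>y\<bar>)^2 * g1 s a ({..<m}-{j}) y)"
    by (rule g1_moment_integrable[OF s]) simp
  show "(\<integral>y. (1 + \<bar>y\<bar>)^2 * g1 s a ({..<m}-{j}) y \<partial>lborel)
       \<le> C3 * exp (1/2) * (17 * real m) powr (s * m) * (\<integral>y. g1 s a ({..<m}-{j}) y \<partial>lborel)"
    using j sm by (intro moment_bound[OF s]) auto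
qed


lemma exp_pL:
  fixes p y :: real
  assumes p: "0 \<le> p" "p \<le> 1" and y: "0 \<le> y"
  shows "exp (p * ln (1 + y)) \<le> 1 + p * (1 + y)^2"
proof -
  define z where "z = p * ln (1 + y)"
  have z0: "0 \<le> z" unfolding z_def using p y by auto
  have "1 - z \<le> exp (-z)" using exp_ge_add_one_self[of "-z"] by simp
  then have "(1 - z) * exp z \<le> exp (-z) * exp z" by (intro mult_right_mono) auto
  then have e1: "exp z \<le> 1 + z * exp z" by (simp add: exp_minus field_simps)
  have "exp z = (1 + y) powr p" unfolding z_def using y by (simp add: powr_def)
  also have "\<dots> \<le> (1 + y) powr 1" using p y by (intro powr_mono) auto
  finally have e2: "exp z \<le> 1 + y" using y by simp
  have "ln (1 + y) \<le> y" using y by (intro ln_add_one_self_le_self)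
  then have "z \<le> p * (1 + y)" unfolding z_def using p by (intro mult_left_mono) auto
  then have "z * exp z \<le> (p * (1 + y)) * (1 + y)" using e2 z0 by (intro mult_mono) auto
  then show ?thesis using e1 unfolding z_def by (simp add: power2_eq_square mult_ac)
qed

lemma upperpt:
  fixes s b :: real and m k :: nat and c :: "nat \<Rightarrow> real"
  assumes s: "0 \<le> s" and m: "1 \<le> m" and b: "0 < b" and p: "s * k * m \<le> 1"
  defines "M \<equiv> 1 + (\<Sum>i<k. \<bar>c i\<bar>) + 1 / b"
  shows "exp (s * (\<Sum>i<k. \<Sum>j<m. ln \<bar>c i - l j / b\<bar>))
     \<le> M powr (s * k * m) * (1 + (s * k) * (\<Sum>j<m. (1 + \<bar>l j\<bar>)^2))"
proof -
  define p where "p = s * k * m"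
  define L where "L j = ln (1 + \<bar>l j\<bar>)" for j
  have p0: "0 \<le> p" using s unfolding p_def by simp
  have p1: "p \<le> 1" using p unfolding p_def .
  have sk: "s * k = p / m" using m unfolding p_def by simp
  have sum0: "0 \<le> (\<Sum>i<k. \<bar>c i\<bar>)" by (intro sum_nonneg) auto
  have M1: "1 \<le> M" unfolding M_def using sum0 b by simp
  have ci: "\<bar>c i\<bar> \<le> M" if "i < k" for i
  proof -
    have "\<bar>c i\<bar> \<le> (\<Sum>i<k. \<bar>c i\<bar>)" using that by (intro member_le_sum) auto
    moreover have "0 \<le> 1 / b" using b by simp
    ultimately show ?thesis unfolding M_def by linarith
  qed
  have bM: "1 / b \<le> M" unfolding M_def using sum0 by simp
  have tm: "ln \<bar>c i - l j / b\<bar> \<le> ln M + L j" if i: "i < k" for i j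
  proof (cases "c i - l j / b = 0")
    case True then show ?thesis using M1 unfolding L_def by simp
  next
    case False
    have "\<bar>c i - l j / b\<bar> \<le> \<bar>c i\<bar> + \<bar>l j\<bar> * (1 / b)" using b by (simp add: abs_triangle_ineq4[THEN order.trans])
    also have "\<dots> \<le> M + \<bar>l j\<bar> * M" using ci[OF i] bM by (intro add_mono mult_left_mono) auto
    also have "\<dots> = M * (1 + \<bar>l j\<bar>)" by (simp add: algebra_simps)
    finally have "ln \<bar>c i - l j / b\<bar> \<le> ln (M * (1 + \<bar>l j\<bar>))" using False by (intro ln_mono) auto
    also have "\<dots> = ln M + L j" unfolding L_def using M1 by (simp add: ln_mult add_pos_nonneg)
    finally show ?thesis .
  qed
  have "s * (\<Sum>i<k. \<Sum>j<m. ln \<bar>c i - l j / b\<bar>) \<le> s * (\<Sum>i<k. \<Sum>j<m. ln M + L j)"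
    using tm s by (intro mult_left_mono sum_mono) auto
  also have "\<dots> = p * ln M + (\<Sum>j<m. (1 / real m) * (p * L j))"
    unfolding p_def using m by (simp add: sum.distrib sum_distrib_left algebra_simps)
  finally have S: "s * (\<Sum>i<k. \<Sum>j<m. ln \<bar>c i - l j / b\<bar>) \<le> p * ln M + (\<Sum>j<m. (1 / real m) * (p * L j))" .
  have cvx: "exp (\<Sum>j<m. (1 / real m) *\<^sub>R (p * L j)) \<le> (\<Sum>j<m. (1 / real m) * exp (p * L j))"
    using m by (intro convex_on_sum[OF _ _ exp_convex]) (auto simp: lessThan_empty_iff)
  have "exp (s * (\<Sum>i<k. \<Sum>j<m. ln \<bar>c i - l j / b\<bar>)) \<le> exp (p * ln M + (\<Sum>j<m. (1 / real m) * (p * L j)))"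
    using S by simp
  also have "\<dots> = M powr p * exp (\<Sum>j<m. (1 / real m) *\<^sub>R (p * L j))"
    using M1 by (simp add: exp_add powr_def mult_ac)
  also have "\<dots> \<le> M powr p * (\<Sum>j<m. (1 / real m) * exp (p * L j))"
    using cvx by (intro mult_left_mono) auto
  also have "\<dots> \<le> M powr p * (\<Sum>j<m. (1 / real m) * (1 + p * (1 + \<bar>l j\<bar>)^2))"
    unfolding L_def using p0 p1 by (intro mult_left_mono sum_mono exp_pL) auto
  also have "(\<Sum>j<m. (1 / real m) * (1 + p * (1 + \<bar>l j\<bar>)^2)) = 1 + (p / m) * (\<Sum>j<m. (1 + \<bar>l j\<bar>)^2)"
  proof -
    have "(\<Sum>j<m. (1 / real m) * (1 + p * (1 + \<bar>l j\<bar>)^2)) = (\<Sum>j<m. 1 / real m) + (\<Sum>j<m. (p / m) * (1 + \<bar>l j\<bar>)^2)"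
      unfolding sum.distrib[symmetric] by (intro sum.cong refl) (simp add: algebra_simps)
    also have "(\<Sum>j<m. 1 / real m) = 1" using m by simp
    finally show ?thesis by (simp add: sum_distrib_left)
  qed
  finally show ?thesis using m unfolding p_def by simp
qed


lemma f_measurable[measurable]:
  "(\<lambda>l. exp (s * (\<Sum>i<k. \<Sum>j<m. ln \<bar>c i - l j / b\<bar>))) \<in> borel_measurable (RmMeasure m)"
  unfolding RmMeasure_def by measurable

lemma moment_D_integrable:
  assumes s: "0 \<le> s" and j: "j < m"
  shows "integrable (RmMeasure m) (\<lambda>l. (1 + \<bar>l j\<bar>)^2 * beta_dens m s l)"
  by (rule dens_h_integrable[OF s j]) auto

lemma FD_integrable:
  assumes s: "0 \<le> s" and m: "1 \<le> m"
  shows "integrable (RmMeasure m) (\<lambda>l. (A + B * (\<Sum>j<m. (1 + \<bar>l j\<bar>)^2)) * beta_dens m s l)"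
proof -
  have isum: "integrable (RmMeasure m) (\<lambda>l. \<Sum>j<m. (1 + \<bar>l j\<bar>)^2 * beta_dens m s l)"
    by (intro Bochner_Integration.integrable_sum) (use moment_D_integrable[OF s] in auto)
  have "integrable (RmMeasure m) (\<lambda>l. A * beta_dens m s l + B * (\<Sum>j<m. (1 + \<bar>l j\<bar>)^2 * beta_dens m s l))"
    using dens_integrable[OF s, of 0 m] m isum by auto
  then show ?thesis by (simp add: algebra_simps sum_distrib_right sum_distrib_left)
qed

lemma fD_integrable:
  fixes s b :: real and m k :: nat and c :: "nat \<Rightarrow> real"
  assumes s: "0 \<le> s" and m: "1 \<le> m" and b: "0 < b" and p: "s * k * m \<le> 1"
  shows "integrable (RmMeasure m) (\<lambda>l. exp (s * (\<Sum>i<k. \<Sum>j<m. ln \<bar>c i - l j / b\<bar>)) * beta_dens m s l)"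
proof -
  define M where "M = 1 + (\<Sum>i<k. \<bar>c i\<bar>) + 1 / b"
  show ?thesis
    using FD_integrable[OF s m, of "M powr (s * k * m)" "M powr (s * k * m) * (s * k)"]
  proof (rule Bochner_Integration.integrable_bound)
    show "AE l in RmMeasure m. norm (exp (s * (\<Sum>i<k. \<Sum>j<m. ln \<bar>c i - l j / b\<bar>)) * beta_dens m s l)
       \<le> norm ((M powr (s * k * m) + M powr (s * k * m) * (s * k) * (\<Sum>j<m. (1 + \<bar>l j\<bar>)^2)) * beta_dens m s l)"
    proof (intro AE_I2)
      fix l :: "nat \<Rightarrow> real"
      have "exp (s * (\<Sum>i<k. \<Sum>j<m. ln \<bar>c i - l j / b\<bar>)) * beta_dens m s l
         \<le> (M powr (s * k * m) * (1 + (s * k) * (\<Sum>j<m. (1 + \<bar>l j\<bar>)^2))) * beta_dens m s l"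
        using upperpt[OF s m b p, of c l] beta_dens_nonneg unfolding M_def by (intro mult_right_mono) auto
      then show "norm (exp (s * (\<Sum>i<k. \<Sum>j<m. ln \<bar>c i - l j / b\<bar>)) * beta_dens m s l)
       \<le> norm ((M powr (s * k * m) + M powr (s * k * m) * (s * k) * (\<Sum>j<m. (1 + \<bar>l j\<bar>)^2)) * beta_dens m s l)"
        using beta_dens_nonneg[of m s l] by (simp add: algebra_simps abs_mult)
    qed
  qed simp
qed

lemma E_upper:
  fixes s b :: real and m k :: nat and c :: "nat \<Rightarrow> real"
  assumes s: "0 \<le> s" and m: "1 \<le> m" and b: "0 < b" and p: "s * k * m \<le> 1" and sm: "s * m \<le> 1"
  defines "M \<equiv> 1 + (\<Sum>i<k. \<bar>c i\<bar>) + 1 / b"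
  shows "beta_E m s (\<lambda>l. exp (s * (\<Sum>i<k. \<Sum>j<m. ln \<bar>c i - l j / b\<bar>)))
     \<le> M powr (s * k * m) * (1 + s * k * m * (C3 * exp (1/2) * (17 * real m) powr (s * m)))"
proof -
  define K where "K = C3 * exp (1/2) * (17 * real m) powr (s * m)"
  define Z where "Z = beta_Z m s"
  have Z: "0 < Z" unfolding Z_def using Z_pos[OF s m] .
  have "(\<integral>l. exp (s * (\<Sum>i<k. \<Sum>j<m. ln \<bar>c i - l j / b\<bar>)) * beta_dens m s l \<partial>RmMeasure m)
      \<le> (\<integral>l. (M powr (s * k * m) + M powr (s * k * m) * (s * k) * (\<Sum>j<m. (1 + \<bar>l j\<bar>)^2)) * beta_dens m s l \<partial>RmMeasure m)"
  proof (rule integral_mono)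
    show "integrable (RmMeasure m) (\<lambda>l. exp (s * (\<Sum>i<k. \<Sum>j<m. ln \<bar>c i - l j / b\<bar>)) * beta_dens m s l)"
      by (rule fD_integrable[OF s m b p])
    show "integrable (RmMeasure m) (\<lambda>l. (M powr (s * k * m) + M powr (s * k * m) * (s * k) * (\<Sum>j<m. (1 + \<bar>l j\<bar>)^2)) * beta_dens m s l)"
      by (rule FD_integrable[OF s m])
    fix l :: "nat \<Rightarrow> real"
    have "exp (s * (\<Sum>i<k. \<Sum>j<m. ln \<bar>c i - l j / b\<bar>)) * beta_dens m s l
         \<le> (M powr (s * k * m) * (1 + (s * k) * (\<Sum>j<m. (1 + \<bar>l j\<bar>)^2))) * beta_dens m s l"
      using upperpt[OF s m b p, of c l] beta_dens_nonneg unfolding M_def by (intro mult_right_mono) auto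
    then show "exp (s * (\<Sum>i<k. \<Sum>j<m. ln \<bar>c i - l j / b\<bar>)) * beta_dens m s l
         \<le> (M powr (s * k * m) + M powr (s * k * m) * (s * k) * (\<Sum>j<m. (1 + \<bar>l j\<bar>)^2)) * beta_dens m s l"
      by (simp add: algebra_simps)
  qed
  also have "\<dots> = M powr (s * k * m) * Z + M powr (s * k * m) * (s * k) * (\<Sum>j<m. (\<integral>l. (1 + \<bar>l j\<bar>)^2 * beta_dens m s l \<partial>RmMeasure m))"
  proof -
    have "(\<lambda>l. (M powr (s * k * m) + M powr (s * k * m) * (s * k) * (\<Sum>j<m. (1 + \<bar>l j\<bar>)^2)) * beta_dens m s l)
       = (\<lambda>l. M powr (s * k * m) * beta_dens m s l + M powr (s * k * m) * (s * k) * (\<Sum>j<m. (1 + \<bar>l j\<bar>)^2 * beta_dens m s l))"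
      by (simp add: algebra_simps sum_distrib_left sum_distrib_right)
    moreover have isum: "integrable (RmMeasure m) (\<lambda>l. \<Sum>j<m. (1 + \<bar>l j\<bar>)^2 * beta_dens m s l)"
      by (intro Bochner_Integration.integrable_sum) (use moment_D_integrable[OF s] in auto)
    moreover have "(\<integral>l. (\<Sum>j<m. (1 + \<bar>l j\<bar>)^2 * beta_dens m s l) \<partial>RmMeasure m) = (\<Sum>j<m. (\<integral>l. (1 + \<bar>l j\<bar>)^2 * beta_dens m s l \<partial>RmMeasure m))"
      by (intro Bochner_Integration.integral_sum) (use moment_D_integrable[OF s] in auto)
    moreover have "integrable (RmMeasure m) (beta_dens m s)" using dens_integrable[OF s, of 0 m] m by simp
    ultimately show ?thesis
      unfolding Z_def beta_Z_def by simp
  qed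
  also have "\<dots> \<le> M powr (s * k * m) * Z + M powr (s * k * m) * (s * k) * (\<Sum>j<m. K * Z)"
    using E_moment[OF s _ sm] s unfolding K_def Z_def
    by (intro add_left_mono mult_left_mono sum_mono) auto
  also have "\<dots> = (M powr (s * k * m) * (1 + s * k * m * K)) * Z" by (simp add: algebra_simps)
  finally show ?thesis unfolding beta_E_def Z_def[symmetric] K_def using Z by (simp add: divide_le_eq)
qed


lemma ind_D_integrable:
  assumes s: "0 \<le> s" and j: "j < m"
  shows "integrable (RmMeasure m) (\<lambda>l. indicator {u-r<..<u+r} (l j) * beta_dens m s l)"
  by (rule dens_h_integrable[OF s j]) (auto simp: indicator_def one_le_power)

lemma lowerpt:
  fixes s b r :: real and m k :: nat and c :: "nat \<Rightarrow> real"
  assumes s: "0 \<le> s" and b: "0 < b" and r: "0 < r"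
  shows "exp (s * k * m * ln (r / b)) * (1 - (\<Sum>i<k. \<Sum>j<m. indicator {b * c i - r<..<b * c i + r} (l j)))
     \<le> exp (s * (\<Sum>i<k. \<Sum>j<m. ln \<bar>c i - l j / b\<bar>))"
proof (cases "\<exists>i<k. \<exists>j<m. l j \<in> {b * c i - r<..<b * c i + r}")
  case True
  then obtain i j where ij: "i < k" "j < m" "l j \<in> {b * c i - r<..<b * c i + r}" by blast
  have "1 \<le> (\<Sum>j<m. indicator {b * c i - r<..<b * c i + r} (l j) :: real)"
    using ij member_le_sum[of j "{..<m}" "\<lambda>j. indicator {b * c i - r<..<b * c i + r} (l j) :: real"]
    by auto
  also have "\<dots> \<le> (\<Sum>i<k. \<Sum>j<m. indicator {b * c i - r<..<b * c i + r} (l j))"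
    using ij by (intro member_le_sum) (auto intro: sum_nonneg)
  finally have "exp (s * k * m * ln (r / b)) * (1 - (\<Sum>i<k. \<Sum>j<m. indicator {b * c i - r<..<b * c i + r} (l j))) \<le> 0"
    by (intro mult_nonneg_nonpos) auto
  also have "\<dots> \<le> exp (s * (\<Sum>i<k. \<Sum>j<m. ln \<bar>c i - l j / b\<bar>))" by simp
  finally show ?thesis .
next
  case False
  then have z: "(\<Sum>i<k. \<Sum>j<m. indicator {b * c i - r<..<b * c i + r} (l j) :: real) = 0"
    by (intro sum.neutral ballI) (auto simp: indicator_def)
  have tm: "ln (r / b) \<le> ln \<bar>c i - l j / b\<bar>" if "i < k" "j < m" for i j
  proof -
    have "\<not> (b * c i - r < l j \<and> l j < b * c i + r)" using False that by auto
    then have "r \<le> \<bar>b * c i - l j\<bar>" by (auto simp: abs_if)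
    also have "\<bar>b * c i - l j\<bar> = b * \<bar>c i - l j / b\<bar>"
    proof -
      have "b * c i - l j = b * (c i - l j / b)" using b by (simp add: field_simps)
      then show ?thesis using b by (simp add: abs_mult)
    qed
    finally have "r / b \<le> \<bar>c i - l j / b\<bar>" using b by (simp add: divide_le_eq mult.commute)
    then show ?thesis using r b by (intro ln_mono) auto
  qed
  have "s * k * m * ln (r / b) = s * (\<Sum>i<k. \<Sum>j<m. ln (r / b))" by simp
  also have "\<dots> \<le> s * (\<Sum>i<k. \<Sum>j<m. ln \<bar>c i - l j / b\<bar>)"
    using s tm by (intro mult_left_mono sum_mono) auto
  finally show ?thesis unfolding z by simp
qed

lemma E_lower:
  fixes s b r :: real and m k :: nat and c :: "nat \<Rightarrow> real"
  assumes s: "0 \<le> s" and m: "1 \<le> m" and b: "0 < b" and p: "s * k * m \<le> 1" and r: "0 < r" "r \<le> 1"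
  shows "exp (s * k * m * ln (r / b)) * (1 - k * m * (2 * r * exp (9/2) * (17 * real m) powr (s * m)))
     \<le> beta_E m s (\<lambda>l. exp (s * (\<Sum>i<k. \<Sum>j<m. ln \<bar>c i - l j / b\<bar>)))"
proof -
  define K where "K = 2 * r * exp (9/2) * (17 * real m) powr (s * m)"
  define Z where "Z = beta_Z m s"
  define \<rho> where "\<rho> = exp (s * k * m * ln (r / b))"
  define I where "I i j l = indicator {b * c i - r<..<b * c i + r} (l j) * beta_dens m s l" for i j l
  have Z: "0 < Z" unfolding Z_def using Z_pos[OF s m] .
  have iI: "integrable (RmMeasure m) (I i j)" if "j < m" for i j
    unfolding I_def by (rule ind_D_integrable[OF s that])
  have iS: "integrable (RmMeasure m) (\<lambda>l. \<Sum>i<k. \<Sum>j<m. I i j l)"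
    using iI by (intro Bochner_Integration.integrable_sum) auto
  have iD: "integrable (RmMeasure m) (beta_dens m s)" using dens_integrable[OF s, of 0 m] m by simp
  have "\<rho> * (Z - (\<Sum>i<k. \<Sum>j<m. K * Z)) \<le> \<rho> * (Z - (\<Sum>i<k. \<Sum>j<m. (\<integral>l. I i j l \<partial>RmMeasure m)))"
    unfolding \<rho>_def I_def K_def Z_def
    using E_anticonc[OF s _ r] by (intro mult_left_mono diff_left_mono sum_mono) auto
  also have "\<dots> = (\<integral>l. \<rho> * (beta_dens m s l - (\<Sum>i<k. \<Sum>j<m. I i j l)) \<partial>RmMeasure m)"
  proof -
    have "(\<integral>l. (\<Sum>i<k. \<Sum>j<m. I i j l) \<partial>RmMeasure m) = (\<Sum>i<k. (\<integral>l. (\<Sum>j<m. I i j l) \<partial>RmMeasure m))"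
      using iI by (intro Bochner_Integration.integral_sum Bochner_Integration.integrable_sum) auto
    also have "\<dots> = (\<Sum>i<k. \<Sum>j<m. (\<integral>l. I i j l \<partial>RmMeasure m))"
      using iI by (intro sum.cong refl Bochner_Integration.integral_sum) auto
    finally have "(\<integral>l. (\<Sum>i<k. \<Sum>j<m. I i j l) \<partial>RmMeasure m) = (\<Sum>i<k. \<Sum>j<m. (\<integral>l. I i j l \<partial>RmMeasure m))" .
    then show ?thesis using iS iD unfolding Z_def beta_Z_def by simp
  qed
  also have "\<dots> \<le> (\<integral>l. exp (s * (\<Sum>i<k. \<Sum>j<m. ln \<bar>c i - l j / b\<bar>)) * beta_dens m s l \<partial>RmMeasure m)"
  proof (rule integral_mono)
    show "integrable (RmMeasure m) (\<lambda>l. \<rho> * (beta_dens m s l - (\<Sum>i<k. \<Sum>j<m. I i j l)))"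
      using iS iD by auto
    show "integrable (RmMeasure m) (\<lambda>l. exp (s * (\<Sum>i<k. \<Sum>j<m. ln \<bar>c i - l j / b\<bar>)) * beta_dens m s l)"
      by (rule fD_integrable[OF s m b p])
    fix l :: "nat \<Rightarrow> real"
    have "\<rho> * (beta_dens m s l - (\<Sum>i<k. \<Sum>j<m. I i j l))
        = (\<rho> * (1 - (\<Sum>i<k. \<Sum>j<m. indicator {b * c i - r<..<b * c i + r} (l j)))) * beta_dens m s l"
    proof -
      have e: "(\<Sum>i<k. \<Sum>j<m. I i j l) = (\<Sum>i<k. \<Sum>j<m. indicator {b * c i - r<..<b * c i + r} (l j)) * beta_dens m s l"
        unfolding I_def by (simp only: sum_distrib_right)
      have g: "\<And>X. \<rho> * (beta_dens m s l - X * beta_dens m s l) = (\<rho> * (1 - X)) * beta_dens m s l"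
        by (simp add: algebra_simps)
      show ?thesis unfolding e by (rule g)
    qed
    also have "\<dots> \<le> exp (s * (\<Sum>i<k. \<Sum>j<m. ln \<bar>c i - l j / b\<bar>)) * beta_dens m s l"
      unfolding \<rho>_def using lowerpt[OF s b r(1), of k m c l] beta_dens_nonneg
      by (intro mult_right_mono) auto
    finally show "\<rho> * (beta_dens m s l - (\<Sum>i<k. \<Sum>j<m. I i j l))
        \<le> exp (s * (\<Sum>i<k. \<Sum>j<m. ln \<bar>c i - l j / b\<bar>)) * beta_dens m s l" .
  qed
  finally have main: "\<rho> * (Z - (\<Sum>i<k. \<Sum>j<m. K * Z)) \<le> (\<integral>l. exp (s * (\<Sum>i<k. \<Sum>j<m. ln \<bar>c i - l j / b\<bar>)) * beta_dens m s l \<partial>RmMeasure m)" .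
  have "\<rho> * (Z - (\<Sum>i<k. \<Sum>j<m. K * Z)) = (\<rho> * (1 - k * m * K)) * Z" by (simp add: algebra_simps)
  then show ?thesis using main Z unfolding beta_E_def Z_def[symmetric] \<rho>_def K_def
    by (simp add: le_divide_eq)
qed

lemma per_n:
  fixes n k :: nat and s dn an bn :: real and x :: "nat \<Rightarrow> real"
  assumes n: "k + 3 \<le> n" and k: "1 \<le> k"
    and s0: "0 \<le> s" and sA: "real n * s * (real k + 1) \<le> 1"
    and d0: "0 < dn" and dl: "\<bar>ln dn\<bar> \<le> ln (real n) / 8"
    and lnln: "ln (ln (real n)) + ln (4 * pi) \<le> ln (real n) / 4" and ll0: "0 \<le> ln (ln (real n))"
    and b1: "1 \<le> 7/8 * sqrt (2 * ln (real n))" and b2: "9/8 * sqrt (2 * ln (real n)) \<le> real n"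
    and an: "an = dn * sqrt (2 * ln (real n))"
    and bn: "bn = sqrt (2 * ln (real n)) - (ln (ln (real n)) + 2 * ln dn + ln (4 * pi)) / (2 * sqrt (2 * ln (real n)))"
    and qs: "2 * real k * exp (9/2) * exp (real n * s * ln 17 + real n * ln (real n) * s) * (1 / real n) \<le> 1"
  defines "E \<equiv> beta_E (n - k) s (\<lambda>l. exp (s * (\<Sum>i<k. \<Sum>j<n - k. ln \<bar>1 + x i / (an * bn) - l j / bn\<bar>)))"
    and "Q \<equiv> exp (real n * s * ln 17 + real n * ln (real n) * s)"
    and "X \<equiv> (\<Sum>i<k. \<bar>x i\<bar>)"
  shows "exp (- 3 * real k * (real n * ln (real n) * s)) * (1 - 2 * real k * exp (9/2) * Q * (1 / real n)) \<le> E"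
    and "E \<le> exp (real k * (real n * s * ln (2 + real k + X) + real n * ln (real n) * s)) *
             (1 + real k * (real n * s) * (C3 * exp (1/2) * Q))"
proof -
  define m where "m = n - k"
  define Lg where "Lg = ln (real n)"
  define T where "T = sqrt (2 * Lg)"
  define c where "c i = 1 + x i / (an * bn)" for i
  have m1: "1 \<le> m" using n unfolding m_def by simp
  have mn: "real m \<le> real n" unfolding m_def by simp
  have n1: "1 \<le> real n" using n by simp
  have Lg0: "0 \<le> Lg" unfolding Lg_def using n1 by simp
  have T1: "1 \<le> 7/8 * T" using b1 unfolding T_def Lg_def .
  have T0: "0 < T" using T1 by simp
  have TT: "T * T = 2 * Lg" unfolding T_def using Lg0 by simp
  have Tn: "9/8 * T \<le> real n" using b2 unfolding T_def Lg_def .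
  have ln4pi: "0 \<le> ln (4 * pi)" using pi_gt3 by simp
  define N where "N = ln (ln (real n)) + 2 * ln dn + ln (4 * pi)"
  have Nb: "\<bar>N\<bar> \<le> Lg / 2"
  proof -
    have "ln dn \<le> \<bar>ln dn\<bar>" "- \<bar>ln dn\<bar> \<le> ln dn" by auto
    then show ?thesis unfolding N_def abs_le_iff using lnln ll0 dl ln4pi Lg0 unfolding Lg_def by linarith
  qed
  have frac: "\<bar>N / (2 * T)\<bar> \<le> T / 8"
  proof -
    have "\<bar>N\<bar> \<le> T * T / 4" using Nb TT by simp
    then have "\<bar>N\<bar> / (2 * T) \<le> (T * T / 4) / (2 * T)" using T0 by (intro divide_right_mono) auto
    also have "\<dots> = T / 8" using T0 by (simp add: field_simps)
    finally have le: "\<bar>N\<bar> / (2 * T) \<le> T / 8" .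
    have eq: "\<bar>N / (2 * T)\<bar> = \<bar>N\<bar> / (2 * T)" using T0 by (simp add: abs_divide)
    show ?thesis unfolding eq by (rule le)
  qed
  have bnT: "bn = T - N / (2 * T)" unfolding bn T_def N_def Lg_def by simp
  have fr2: "N/(2*T) \<le> T/8 \<and> -(N/(2*T)) \<le> T/8" using frac by (simp only: abs_le_iff)
  have b_lo: "7/8 * T \<le> bn" using fr2 unfolding bnT by linarith
  have b_hi: "bn \<le> 9/8 * T" using fr2 unfolding bnT by linarith
  have bn1: "1 \<le> bn" using b_lo T1 by linarith
  have bnn: "bn \<le> real n" using b_hi Tn by linarith
  have bn0: "0 < bn" using bn1 by simp
  have dn1: "1 / real n \<le> dn"
  proof -
    have "- Lg \<le> ln dn" using dl Lg0 unfolding Lg_def by (auto simp: abs_le_iff)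
    then have "exp (- Lg) \<le> exp (ln dn)" by simp
    then show ?thesis using d0 n1 unfolding Lg_def by (simp add: exp_minus inverse_eq_divide)
  qed
  have an_ge: "dn \<le> an"
  proof -
    have "1 \<le> T" using T1 by simp
    then have "dn * 1 \<le> dn * T" using d0 by (intro mult_left_mono) auto
    then show ?thesis unfolding an T_def Lg_def by simp
  qed
  have ab: "1 / real n \<le> an * bn"
  proof -
    have "an * 1 \<le> an * bn" using bn1 an_ge d0 by (intro mult_left_mono) auto
    then show ?thesis using dn1 an_ge by simp
  qed
  have ab0: "0 < an * bn" using ab n1 by (meson divide_pos_pos less_le_trans zero_less_one order.strict_trans2)
  have ci: "\<bar>c i\<bar> \<le> 1 + \<bar>x i\<bar> * real n" for i
  proof -
    have "\<bar>x i\<bar> / (an * bn) \<le> \<bar>x i\<bar> / (1 / real n)"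
      using ab ab0 n1 by (intro divide_left_mono) auto
    then have "\<bar>x i / (an * bn)\<bar> \<le> \<bar>x i\<bar> * real n" using ab0 by (simp add: abs_divide)
    then show ?thesis unfolding c_def by (smt (verit) abs_triangle_ineq)
  qed
  define M where "M = 1 + (\<Sum>i<k. \<bar>c i\<bar>) + 1 / bn"
  have X0: "0 \<le> X" unfolding X_def by (intro sum_nonneg) auto
  have M1: "1 \<le> M" unfolding M_def using bn0 by (auto intro!: add_nonneg_nonneg sum_nonneg)
  have MB: "M \<le> (2 + real k + X) * real n"
  proof -
    have "(\<Sum>i<k. \<bar>c i\<bar>) \<le> (\<Sum>i<k. 1 + \<bar>x i\<bar> * real n)" using ci by (intro sum_mono) auto
    also have "\<dots> = real k + X * real n" unfolding X_def by (simp add: sum.distrib sum_distrib_right)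
    moreover have "1 / bn \<le> 1" using bn1 by simp
    ultimately have "M \<le> 2 + real k + X * real n" unfolding M_def by linarith
    also have "\<dots> \<le> (2 + real k + X) * real n"
    proof -
      have "(2 + real k) * 1 \<le> (2 + real k) * real n" using n1 by (intro mult_left_mono) auto
      then show ?thesis by (simp add: algebra_simps)
    qed
    finally show ?thesis .
  qed
  have sn: "s * real n \<le> 1"
  proof -
    have "(s * real n) * 1 \<le> (s * real n) * (real k + 1)" using s0 by (intro mult_left_mono) auto
    then show ?thesis using sA by (simp add: mult_ac)
  qed
  have "s * real m \<le> s * real n" using mn s0 by (intro mult_left_mono) auto
  then have sm: "s * real m \<le> 1" using sn by linarith
  have skm_le: "s * real k * real m \<le> s * real k * real n" using mn s0 by (intro mult_left_mono) auto
  have skn: "s * real k * real n \<le> 1"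
  proof -
    have "s * real k * real n \<le> real n * s * (real k + 1)" using s0 n1 by (simp add: algebra_simps)
    then show ?thesis using sA by linarith
  qed
  have skm: "s * real k * real m \<le> 1" using skm_le skn by linarith
  have Qb: "(17 * real m) powr (s * real m) \<le> Q"
  proof -
    have "(17 * real m) powr (s * real m) \<le> (17 * real m) powr (s * real n)"
      using m1 s0 mn by (intro powr_mono mult_left_mono) auto
    also have "\<dots> \<le> (17 * real n) powr (s * real n)" using m1 mn s0 by (intro powr_mono2) auto
    also have "\<dots> = Q" unfolding Q_def using n1 by (simp add: powr_def ln_mult algebra_simps)
    finally show ?thesis .
  qed
  have Q0: "0 \<le> Q" unfolding Q_def by simp
  have E_eq: "E = beta_E m s (\<lambda>l. exp (s * (\<Sum>i<k. \<Sum>j<m. ln \<bar>c i - l j / bn\<bar>)))"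
    unfolding E_def m_def c_def by simp
  show "E \<le> exp (real k * (real n * s * ln (2 + real k + X) + real n * ln (real n) * s)) *
             (1 + real k * (real n * s) * (C3 * exp (1/2) * Q))"
  proof -
    have "E \<le> M powr (s * k * m) * (1 + s * k * m * (C3 * exp (1/2) * (17 * real m) powr (s * m)))"
      unfolding E_eq M_def using E_upper[OF s0 m1 bn0 skm sm, of c] by simp
    also have "\<dots> \<le> exp (real k * (real n * s * ln (2 + real k + X) + real n * ln (real n) * s)) *
             (1 + real k * (real n * s) * (C3 * exp (1/2) * Q))"
    proof (rule mult_mono)
      have "M powr (s * k * m) \<le> M powr (s * k * n)" using M1 skm_le by (intro powr_mono) auto
      also have "\<dots> \<le> ((2 + real k + X) * real n) powr (s * k * n)"
        using M1 MB s0 by (intro powr_mono2) auto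
      also have "\<dots> = exp (real k * (real n * s * ln (2 + real k + X) + real n * ln (real n) * s))"
      proof -
        have pos: "0 < (2 + real k + X) * real n" using n1 X0 by simp
        have l: "ln ((2 + real k + X) * real n) = ln (2 + real k + X) + ln (real n)"
          using n1 X0 by (simp add: ln_mult)
        have "((2 + real k + X) * real n) powr (s * k * n) = exp ((s * k * n) * ln ((2 + real k + X) * real n))"
        proof -
          have nz: "2 + real k + X \<noteq> 0" "0 < n" using X0 n1 by auto
          then show ?thesis by (simp add: powr_def)
        qed
        also have "\<dots> = exp (real k * (real n * s * ln (2 + real k + X) + real n * ln (real n) * s))"
          unfolding l by (simp add: algebra_simps)
        finally show ?thesis .
      qed
      finally show "M powr (s * k * m) \<le> exp (real k * (real n * s * ln (2 + real k + X) + real n * ln (real n) * s))" .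
      have "s * k * m * (C3 * exp (1/2) * (17 * real m) powr (s * m)) \<le> (real k * (real n * s)) * (C3 * exp (1/2) * Q)"
      proof (rule mult_mono)
        show "s * k * m \<le> real k * (real n * s)" using skm_le by (simp add: mult_ac)
        show "C3 * exp (1/2) * (17 * real m) powr (s * m) \<le> C3 * exp (1/2) * Q"
          using Qb C3_nonneg by (intro mult_left_mono) auto
      qed (use s0 C3_nonneg in auto)
      then show "1 + s * k * m * (C3 * exp (1/2) * (17 * real m) powr (s * m)) \<le> 1 + real k * (real n * s) * (C3 * exp (1/2) * Q)"
        by simp
      show "0 \<le> exp (real k * (real n * s * ln (2 + real k + X) + real n * ln (real n) * s))" by simp
      show "0 \<le> 1 + s * k * m * (C3 * exp (1/2) * (17 * real m) powr (s * m))" using s0 C3_nonneg by simp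
    qed
    finally show ?thesis .
  qed
  show "exp (- 3 * real k * (real n * ln (real n) * s)) * (1 - 2 * real k * exp (9/2) * Q * (1 / real n)) \<le> E"
  proof -
    define r :: real where "r = 1 / (real n)^2"
    have r0: "0 < r" unfolding r_def using n1 by simp
    have r1: "r \<le> 1" unfolding r_def using n1 by (simp add: field_simps one_le_power)
    have "exp (- 3 * real k * (real n * ln (real n) * s)) * (1 - 2 * real k * exp (9/2) * Q * (1 / real n))
        \<le> exp (s * k * m * ln (r / bn)) * (1 - k * m * (2 * r * exp (9/2) * (17 * real m) powr (s * m)))"
    proof (rule mult_mono)
      have lr: "ln (r / bn) = - 2 * Lg - ln bn"
      proof -
        have "ln (r / bn) = ln r - ln bn" using r0 bn0 by (simp add: ln_div)
        moreover have "ln r = - 2 * Lg" unfolding r_def Lg_def using n1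
          by (simp add: ln_div ln_realpow)
        ultimately show ?thesis by simp
      qed
      have lb: "0 \<le> ln bn" "ln bn \<le> Lg" using bn1 bnn n1 unfolding Lg_def by auto
      have "- 3 * real k * (real n * ln (real n) * s) = (s * k * n) * (- 3 * Lg)" unfolding Lg_def by simp
      also have "\<dots> \<le> (s * k * m) * (- 3 * Lg)" using skm_le Lg0 by (intro mult_right_mono_neg) auto
      also have "\<dots> \<le> (s * k * m) * ln (r / bn)" unfolding lr using lb s0 by (intro mult_left_mono) auto
      finally show "exp (- 3 * real k * (real n * ln (real n) * s)) \<le> exp (s * k * m * ln (r / bn))" by simp
      have "k * m * (2 * r * exp (9/2) * (17 * real m) powr (s * m)) \<le> 2 * real k * exp (9/2) * Q * (1 / real n)"
      proof -
        have mr: "real m * r \<le> 1 / real n" unfolding r_def using mn n1 by (simp add: field_simps power2_eq_square)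
        have "k * m * (2 * r * exp (9/2) * (17 * real m) powr (s * m)) = 2 * real k * exp (9/2) * (real m * r) * (17 * real m) powr (s * m)"
          by (simp add: mult_ac)
        also have "\<dots> \<le> 2 * real k * exp (9/2) * (1 / real n) * Q"
          using mr Qb r0 by (intro mult_mono mult_left_mono) auto
        finally show ?thesis by (simp add: mult_ac)
      qed
      then show "1 - 2 * real k * exp (9/2) * Q * (1 / real n) \<le> 1 - k * m * (2 * r * exp (9/2) * (17 * real m) powr (s * m))"
        by simp
      show "0 \<le> exp (s * k * m * ln (r / bn))" by simp
      show "0 \<le> 1 - 2 * real k * exp (9/2) * Q * (1 / real n)" using qs unfolding Q_def by simp
    qed
    also have "\<dots> \<le> E" unfolding E_eq using E_lower[OF s0 m1 bn0 skm r0 r1, of c] by simp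
    finally show ?thesis .
  qed
qed


theorem lemma3p3:
  fixes \<delta> \<beta> a b :: "nat \<Rightarrow> real" and k :: nat and x :: "nat \<Rightarrow> real"
  assumes \<delta>_pos: "\<And>n. \<delta> n > 0"
    and \<delta>_lim: "(\<lambda>n. ln (\<delta> n) / ln (real n)) \<longlonglongrightarrow> 0"
    and \<beta>_nonneg: "\<And>n. \<beta> n \<ge> 0"
    and \<beta>_lim: "(\<lambda>n. real n * ln (real n) * \<beta> n) \<longlonglongrightarrow> 0"
    and a_def: "\<And>n. a n = \<delta> n * sqrt (2 * ln (real n))"
    and b_def: "\<And>n. b n = sqrt (2 * ln (real n)) -
        (ln (ln (real n)) + 2 * ln (\<delta> n) + ln (4 * pi)) / (2 * sqrt (2 * ln (real n)))"
    and k_pos: "k \<ge> 1"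
  shows "(\<lambda>n. beta_E (n - k) (\<beta> n)
            (\<lambda>l. exp (\<beta> n * (\<Sum>i<k. \<Sum>j<n - k.
               ln \<bar>1 + x i / (a n * b n) - l j / b n\<bar>))))
         \<longlonglongrightarrow> 1"
proof -
  define A where "A n = real n * \<beta> n" for n
  define B where "B n = real n * ln (real n) * \<beta> n" for n
  define X where "X = (\<Sum>i<k. \<bar>x i\<bar>)"
  define Q where "Q n = exp (A n * ln 17 + B n)" for n
  define U where "U n = exp (real k * (A n * ln (2 + real k + X) + B n)) * (1 + real k * A n * (C3 * exp (1/2) * Q n))" for n
  define L where "L n = exp (- 3 * real k * B n) * (1 - 2 * real k * exp (9/2) * Q n * (1 / real n))" for n
  define E where "E n = beta_E (n - k) (\<beta> n) (\<lambda>l. exp (\<beta> n * (\<Sum>i<k. \<Sum>j<n - k. ln \<bar>1 + x i / (a n * b n) - l j / b n\<bar>)))" for n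
  have B0: "B \<longlonglongrightarrow> 0" using \<beta>_lim unfolding B_def .
  have A0: "A \<longlonglongrightarrow> 0"
  proof -
    have "(\<lambda>n. B n * (1 / ln (real n))) \<longlonglongrightarrow> 0 * 0"
      by (intro tendsto_mult B0) real_asymp
    moreover have "eventually (\<lambda>n. B n * (1 / ln (real n)) = A n) sequentially"
      using eventually_ge_at_top[of 2]
    proof eventually_elim
      case (elim n)
      then have "ln (real n) > 0" by simp
      then show ?case unfolding A_def B_def by simp
    qed
    ultimately show ?thesis by (simp add: tendsto_cong)
  qed
  have Q1: "Q \<longlonglongrightarrow> 1" unfolding Q_def
    using tendsto_exp[OF tendsto_add[OF tendsto_mult_left_zero[OF A0] B0]] by simp
  have U1: "U \<longlonglongrightarrow> 1" unfolding U_def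
    by (rule tendsto_eq_intros A0 B0 Q1 refl)+ simp
  have inv: "(\<lambda>n. 1 / real n) \<longlonglongrightarrow> 0" by real_asymp
  have L1: "L \<longlonglongrightarrow> 1" unfolding L_def
    by (rule tendsto_eq_intros A0 B0 Q1 inv refl)+ simp
  have qs0: "(\<lambda>n. 2 * real k * exp (9/2) * Q n * (1 / real n)) \<longlonglongrightarrow> 0"
    by (rule tendsto_eq_intros Q1 inv refl)+ simp
  have ev1: "eventually (\<lambda>n. k + 3 \<le> n) sequentially" by (rule eventually_ge_at_top)
  have ev2: "eventually (\<lambda>n. \<bar>ln (\<delta> n) / ln (real n)\<bar> < 1/8) sequentially"
    using tendstoD[OF \<delta>_lim, of "1/8"] by simp
  have ev3: "eventually (\<lambda>n. \<bar>A n\<bar> < 1 / (real k + 1)) sequentially"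
    using tendstoD[OF A0, of "1 / (real k + 1)"] by simp
  have ev4: "eventually (\<lambda>n. \<bar>2 * real k * exp (9/2) * Q n * (1 / real n)\<bar> < 1) sequentially"
    using tendstoD[OF qs0, of 1] by simp
  have ev5: "eventually (\<lambda>n::nat. ln (ln (real n)) + ln (4 * pi) \<le> ln (real n) / 4) sequentially" by real_asymp
  have ev6: "eventually (\<lambda>n::nat. 1 \<le> 7/8 * sqrt (2 * ln (real n))) sequentially" by real_asymp
  have ev7: "eventually (\<lambda>n::nat. 9/8 * sqrt (2 * ln (real n)) \<le> real n) sequentially" by real_asymp
  have ev8: "eventually (\<lambda>n::nat. 0 \<le> ln (ln (real n))) sequentially" by real_asymp
  have ev: "eventually (\<lambda>n. L n \<le> E n \<and> E n \<le> U n) sequentially"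
    using ev1 ev2 ev3 ev4 ev5 ev6 ev7 ev8
  proof eventually_elim
    case (elim n)
    have n1: "1 \<le> real n" using elim(1) by simp
    have lpos: "0 < ln (real n)" using elim(1) by simp
    have dl: "\<bar>ln (\<delta> n)\<bar> \<le> ln (real n) / 8"
    proof -
      have "\<bar>ln (\<delta> n)\<bar> / ln (real n) < 1/8" using elim(2) lpos by (simp add: abs_divide)
      then show ?thesis using lpos by (simp add: field_simps)
    qed
    have sA: "real n * \<beta> n * (real k + 1) \<le> 1"
    proof -
      have "A n < 1 / (real k + 1)" using elim(3) by simp
      then show ?thesis unfolding A_def by (simp add: field_simps)
    qed
    have qs: "2 * real k * exp (9/2) * exp (real n * \<beta> n * ln 17 + real n * ln (real n) * \<beta> n) * (1 / real n) \<le> 1"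
      using elim(4) unfolding Q_def A_def B_def by simp
    note P = per_n[OF elim(1) k_pos \<beta>_nonneg sA \<delta>_pos dl elim(5) elim(8) elim(6) elim(7) a_def b_def qs]
    show ?case
    proof
      show "L n \<le> E n" using P(1) unfolding L_def E_def Q_def A_def B_def by simp
      show "E n \<le> U n" using P(2) unfolding U_def E_def Q_def A_def B_def X_def by simp
    qed
  qed
  have "E \<longlonglongrightarrow> 1"
    by (rule tendsto_sandwich[OF _ _ L1 U1]) (use ev in \<open>auto elim: eventually_mono\<close>)
  then show ?thesis unfolding E_def .
qed

end
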